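(* Let $n$ be a positive integer and $\mathbf a\in\mathbb N^n$. Then $$\sum_{m\ge0}v^{(n,m)}(\mathbf a)x^m=\frac{\sum_{\mathbf j\in\{0,1\}^n}(-1)^{\mathrm{ind}(\chi(\mathbf a))+\mathrm{ind}(\mathbf j)}Q_{\mathbf a,\mathbf j}(x)}{(1-x)^{2^n}},$$ where $Q_{\mathbf a,\mathbf j}(x)$ is the determinant of the matrix obtained from $I-xA_n$ by deleting the row indexed by $\mathbf j$ and the column indexed by $\chi(\mathbf a)$. In particular, $v^{(n,m)}(\mathbf a)$ is a polynomial in $m$ of degree at most $2^n-1$.
   Context: $G(n,m)$ is the directed graph with vertex set $\{(i,j):1\le i\le n,\ 0\le j\le m\}\cup\{s\}$ and edges $((i,j),(i,j+1))$ for $1\le i\le n$, $0\le j\le m-1$; $((i,j),(i+1,j))$ for $1\le i\le n-1$, $0\le j\le m$; $((n,j),s)$ for $0\le j\le m$. $\mathcal F_{G(n,m)}(\mathbf a)$ is the polytope of nonnegative real edge weightings with outflow minus inflow equal to $a_i$ at $(i,0)$, $-\sum_i a_i$ at $s$, and $0$ elsewhere; $v^{(n,m)}(\mathbf a)$ is its number of vertices for $m\ge1$, with the convention $v^{(n,0)}(\mathbf a)=1$. $\chi(\mathbf a)\in\{0,1\}^n$ has $\chi(\mathbf a)_i=1$ iff $a_i>0$. For $\mathbf u\in\{0,1\}^n$, $\mathrm{ind}(\mathbf u)=\sum_i u_i2^{i-1}$. Dominance: $\mathbf v\trianglerighteq\mathbf w$ iff $\sum_{k\le i}v_k\ge\sum_{k\le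 i}w_k$ for all $i$. For $\mathbf v,\mathbf w$ with $\mathbf v\trianglerighteq\mathbf w$ and $\chi(\mathbf v)\trianglerighteq\chi(\mathbf w)$, let $Z_{\mathbf v}=\{i:v_i=0\}$, $Z_{\mathbf w}=\{i:w_i=0\}$ and build the matching $M$ by repeatedly matching the largest unmatched $i'\in Z_{\mathbf v}$ to the largest unmatched element of $Z_{\mathbf w}$ that is $\le i'$; $\mathbf v\trianglerighteq_1\mathbf w$ means moreover $i-j\le1$ for all $(i,j)\in M$. $A_n$ is the $2^n\times2^n$ matrix with rows and columns indexed by $\{0,1\}^n$, ordered by $\mathrm{ind}$, with $(A_n)_{\mathbf u,\mathbf v}=1$ if $\mathbf u\trianglerighteq_1\mathbf v$ and $0$ otherwise; $I$ is the $2^n\times2^n$ identity matrix. *)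

theory Defs
  imports "HOL-Computational_Algebra.Polynomial"
          "HOL-Computational_Algebra.Formal_Power_Series"
          "HOL-Computational_Algebra.Polynomial_FPS"
          "Jordan_Normal_Form.Determinant"
begin

text \<open>Vertices: Node i j stands for (i,j); Sink stands for s.\<close>
datatype gvert = Node nat nat | Sink

definition G_vertices :: "nat \<Rightarrow> nat \<Rightarrow> gvert set" where
  "G_vertices n m = {Node i j | i j. 1 \<le> i \<and> i \<le> n \<and> j \<le> m} \<union> {Sink}"

definition G_edges :: "nat \<Rightarrow> nat \<Rightarrow> (gvert \<times> gvert) set" where
  "G_edges n m =
     {(Node i j, Node i (j+1)) | i j. 1 \<le> i \<and> i \<le> n \<and> j \<le> m - 1 \<and> 1 \<le> m}
   \<union> {(Node i j, Node (i+1) j) | i j. 1 \<le> i \<and> i \<le> n - 1 \<and> j \<le> m}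
   \<union> {(Node n j, Sink) | j. j \<le> m}"

definition netflow :: "nat \<Rightarrow> nat \<Rightarrow> (gvert \<times> gvert \<Rightarrow> real) \<Rightarrow> gvert \<Rightarrow> real" where
  "netflow n m f x =
     (\<Sum>e\<in>{e \<in> G_edges n m. fst e = x}. f e) - (\<Sum>e\<in>{e \<in> G_edges n m. snd e = x}. f e)"

text \<open>Prescribed net flow: a_i at (i,0), minus the sum of the a_i at s, 0 elsewhere.
  The vector a in N^n is given as a function on the indices 1..n.\<close>
definition flow_supply :: "nat \<Rightarrow> (nat \<Rightarrow> nat) \<Rightarrow> gvert \<Rightarrow> real" where
  "flow_supply n a x = (case x of
       Node i j \<Rightarrow> (if j = 0 then real (a i) else 0)
     | Sink \<Rightarrow> - (\<Sum>i=1..n. real (a i)))"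

text \<open>The flow polytope, as a subset of R^E (weightings vanish off the edge set).\<close>
definition flow_polytope :: "nat \<Rightarrow> nat \<Rightarrow> (nat \<Rightarrow> nat) \<Rightarrow> (gvert \<times> gvert \<Rightarrow> real) set" where
  "flow_polytope n m a =
     {f. (\<forall>e. e \<notin> G_edges n m \<longrightarrow> f e = 0)
       \<and> (\<forall>e\<in>G_edges n m. 0 \<le> f e)
       \<and> (\<forall>x\<in>G_vertices n m. netflow n m f x = flow_supply n a x)}"

definition is_vertex :: "(gvert \<times> gvert \<Rightarrow> real) set \<Rightarrow> (gvert \<times> gvert \<Rightarrow> real) \<Rightarrow> bool" where
  "is_vertex P f \<longleftrightarrow> f \<in> P \<and>
     (\<forall>g\<in>P. \<forall>h\<in>P. \<forall>t::real. 0 < t \<and> t < 1 \<and> f = (\<lambda>e. (1 - t) * g e + t * h e) \<longrightarrow> g = h)"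

definition num_vertices :: "nat \<Rightarrow> nat \<Rightarrow> (nat \<Rightarrow> nat) \<Rightarrow> nat" where
  "num_vertices n m a = (if m = 0 then 1 else card {f. is_vertex (flow_polytope n m a) f})"

text \<open>Vectors are functions on indices 1..n.\<close>
definition chi :: "(nat \<Rightarrow> nat) \<Rightarrow> nat \<Rightarrow> nat" where
  "chi a = (\<lambda>i. if a i > 0 then 1 else 0)"

definition ind :: "nat \<Rightarrow> (nat \<Rightarrow> nat) \<Rightarrow> nat" where
  "ind n u = (\<Sum>i=1..n. u i * 2 ^ (i - 1))"

text \<open>The 0/1-vector u with ind u = k.\<close>
definition bitvec :: "nat \<Rightarrow> nat \<Rightarrow> nat" where
  "bitvec k = (\<lambda>i. if bit k (i - 1) then 1 else 0)"

definition dominates :: "nat \<Rightarrow> (nat \<Rightarrow> nat) \<Rightarrow> (nat \<Rightarrow> nat) \<Rightarrow> bool" where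
  "dominates n v w \<longleftrightarrow> (\<forall>i\<in>{1..n}. (\<Sum>k=1..i. w k) \<le> (\<Sum>k=1..i. v k))"

fun greedy_match :: "nat list \<Rightarrow> nat list \<Rightarrow> (nat \<times> nat) list option" where
  "greedy_match [] ws = Some []"
| "greedy_match (i # is) ws =
     (if {j \<in> set ws. j \<le> i} = {} then None
      else let j = Max {j \<in> set ws. j \<le> i} in
        map_option (Cons (i, j)) (greedy_match is (remove1 j ws)))"

definition zeros :: "nat \<Rightarrow> (nat \<Rightarrow> nat) \<Rightarrow> nat set" where
  "zeros n v = {i \<in> {1..n}. v i = 0}"

definition dominates1 :: "nat \<Rightarrow> (nat \<Rightarrow> nat) \<Rightarrow> (nat \<Rightarrow> nat) \<Rightarrow> bool" where
  "dominates1 n v w \<longleftrightarrow> dominates n v w \<and> dominates n (chi v) (chi w) \<and>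
     (case greedy_match (rev (sorted_list_of_set (zeros n v)))
                        (rev (sorted_list_of_set (zeros n w))) of
        None \<Rightarrow> False
      | Some M \<Rightarrow> (\<forall>(i, j) \<in> set M. i - j \<le> 1))"

text \<open>A_n, rows/columns indexed by 0..2^n-1 via ind.\<close>
definition A_mat :: "nat \<Rightarrow> int mat" where
  "A_mat n = mat (2 ^ n) (2 ^ n)
     (\<lambda>(r, c). if dominates1 n (bitvec r) (bitvec c) then 1 else 0)"

definition IxA :: "nat \<Rightarrow> real poly mat" where
  "IxA n = 1\<^sub>m (2 ^ n) - smult_mat [:0, 1:] (map_mat (\<lambda>z. [:real_of_int z:]) (A_mat n))"

definition Q_poly :: "nat \<Rightarrow> (nat \<Rightarrow> nat) \<Rightarrow> nat \<Rightarrow> real poly" where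
  "Q_poly n a j = det (mat_delete (IxA n) j (ind n (chi a)))"

end

theory Submission
  imports Defs
begin


fun act :: "(nat \<Rightarrow> nat) \<Rightarrow> (nat \<Rightarrow> nat) \<Rightarrow> nat \<Rightarrow> bool" where
  "act u w 0 = False"
| "act u w (Suc i) = (u (Suc i) \<noteq> 0 \<or> (act u w i \<and> w i = 0))"

definition realz :: "nat \<Rightarrow> (nat \<Rightarrow> nat) \<Rightarrow> (nat \<Rightarrow> nat) \<Rightarrow> bool" where
  "realz n u w \<longleftrightarrow> (\<forall>i\<in>{1..n}. w i \<noteq> 0 \<longrightarrow> act u w i)"

lemma act_cong:
  "(\<And>j. 1 \<le> j \<Longrightarrow> j \<le> i \<Longrightarrow> u j = u' j) \<Longrightarrow> (\<And>j. 1 \<le> j \<Longrightarrow> j < i \<Longrightarrow> w j = w' j)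
   \<Longrightarrow> act u w i = act u' w' i"
proof (induction i)
  case 0 then show ?case by simp
next
  case (Suc i)
  have "act u w i = act u' w' i" using Suc by auto
  moreover have "u (Suc i) = u' (Suc i)" using Suc by auto
  moreover have "act u w i \<Longrightarrow> w i = w' i" using Suc by (cases i) auto
  ultimately show ?case by auto
qed

lemma realz_cong:
  "(\<And>j. 1 \<le> j \<Longrightarrow> j \<le> n \<Longrightarrow> u j = u' j) \<Longrightarrow> (\<And>j. 1 \<le> j \<Longrightarrow> j \<le> n \<Longrightarrow> w j = w' j)
   \<Longrightarrow> realz n u w = realz n u' w'"
  unfolding realz_def
proof -
  assume a: "\<And>j. 1 \<le> j \<Longrightarrow> j \<le> n \<Longrightarrow> u j = u' j" "\<And>j. 1 \<le> j \<Longrightarrow> j \<le> n \<Longrightarrow> w j = w' j"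
  have "\<And>i. i \<in> {1..n} \<Longrightarrow> act u w i = act u' w' i"
    by (rule act_cong) (use a in auto)
  then show "(\<forall>i\<in>{1..n}. w i \<noteq> 0 \<longrightarrow> act u w i) = (\<forall>i\<in>{1..n}. w' i \<noteq> 0 \<longrightarrow> act u' w' i)"
    using a(2) by auto
qed

fun goodS :: "nat list \<Rightarrow> nat set \<Rightarrow> bool" where
  "goodS [] W = True"
| "goodS (i # xs) W = (if i \<in> W then goodS xs (W - {i})
     else if 1 \<le> i \<and> i - 1 \<in> W then goodS xs (W - {i - 1}) else False)"

definition okM :: "(nat \<times> nat) list option \<Rightarrow> bool" where
  "okM X = (case X of None \<Rightarrow> False | Some M \<Rightarrow> (\<forall>(i, j) \<in> set M. i - j \<le> (1::nat)))"

lemma okM_cons: "okM (map_option (Cons (a, b)) X) = (a - b \<le> 1 \<and> okM X)"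
  unfolding okM_def by (cases X) auto

lemma gm_step:
  assumes "j \<in> set ws" "j \<le> i" "\<And>k. k \<in> set ws \<Longrightarrow> k \<le> i \<Longrightarrow> k \<le> j"
  shows "greedy_match (i # xs) ws = map_option (Cons (i, j)) (greedy_match xs (remove1 j ws))"
proof -
  have ne: "{k \<in> set ws. k \<le> i} \<noteq> {}" using assms by auto
  have mx: "Max {k \<in> set ws. k \<le> i} = j" using assms by (intro Max_eqI) auto
  show ?thesis by (simp only: greedy_match.simps if_not_P[OF ne] Let_def mx)
qed

lemma goodL:
  "distinct ws \<Longrightarrow> okM (greedy_match xs ws) = goodS xs (set ws)"
proof (induction xs arbitrary: ws)
  case Nil then show ?case by (simp add: okM_def)
next
  case (Cons i xs)
  have IH: "\<And>j. okM (greedy_match xs (remove1 j ws)) = goodS xs (set ws - {j})"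
    using Cons.IH Cons.prems by (simp add: set_remove1_eq)
  show ?case
  proof (cases "i \<in> set ws")
    case True
    have "greedy_match (i # xs) ws = map_option (Cons (i, i)) (greedy_match xs (remove1 i ws))"
      by (rule gm_step) (use True in auto)
    then show ?thesis using True IH by (simp add: okM_cons)
  next
    case False
    note F = False
    show ?thesis
    proof (cases "1 \<le> i \<and> i - 1 \<in> set ws")
      case True
      have "greedy_match (i # xs) ws = map_option (Cons (i, i - 1)) (greedy_match xs (remove1 (i - 1) ws))"
      proof (rule gm_step)
        fix k assume "k \<in> set ws" "k \<le> i"
        then have "k \<noteq> i" using F by auto
        then show "k \<le> i - 1" using \<open>k \<le> i\<close> by linarith
      qed (use True in auto)
      moreover have "i - (i - 1) \<le> 1" by simp
      ultimately show ?thesis using True F IH by (simp add: okM_cons)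
    next
      case False
      have "\<not> okM (greedy_match (i # xs) ws)"
      proof (cases "{k \<in> set ws. k \<le> i} = {}")
        case True
        then show ?thesis by (simp add: okM_def)
      next
        case ne: False
        let ?J = "Max {k \<in> set ws. k \<le> i}"
        have "?J \<in> {k \<in> set ws. k \<le> i}" using ne by (intro Max_in) auto
        then have J: "?J \<in> set ws" "?J \<le> i" by auto
        have "greedy_match (i # xs) ws = map_option (Cons (i, ?J)) (greedy_match xs (remove1 ?J ws))"
          by (rule gm_step) (use J in auto)
        moreover have "\<not> (i - ?J \<le> 1)"
        proof
          assume "i - ?J \<le> 1"
          then have "?J = i \<or> (1 \<le> i \<and> ?J = i - 1)" using J(2) by linarith
          then show False using J(1) F False by auto
        qed
        ultimately show ?thesis by (simp add: okM_cons)
      qed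
      moreover have "\<not> goodS (i # xs) (set ws)" using F False by auto
      ultimately show ?thesis by blast
    qed
  qed
qed

lemma goodS_drop:
  "(\<forall>i\<in>set xs. i < x) \<Longrightarrow> goodS xs W = goodS xs (W - {x})"
proof (induction xs arbitrary: W)
  case Nil then show ?case by simp
next
  case (Cons i xs)
  have ix: "i < x" using Cons by auto
  have e1: "W - {x} - {i} = W - {i} - {x}" by auto
  have e2: "W - {x} - {i - Suc 0} = W - {i - Suc 0} - {x}" by auto
  have ne: "i \<noteq> x" "i - Suc 0 \<noteq> x" using ix by auto
  show ?case using ix ne Cons.IH[of "W - {i}"] Cons.IH[of "W - {i - 1}"] Cons.prems
    by (simp add: e1 e2)
qed

definition desc :: "nat set \<Rightarrow> nat list" where
  "desc S = rev (sorted_list_of_set S)"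

lemma zeros_Suc:
  "zeros (Suc n) v = (if v (Suc n) = 0 then insert (Suc n) (zeros n v) else zeros n v)"
  unfolding zeros_def by (auto simp: le_Suc_eq)

lemma zeros_le: "x \<in> zeros n v \<Longrightarrow> x \<le> n"
  unfolding zeros_def by auto

lemma finite_zeros[simp]: "finite (zeros n v)"
  unfolding zeros_def by auto

lemma desc_insert:
  assumes "finite S" "\<forall>y\<in>S. y < x"
  shows "desc (insert x S) = x # desc S"
proof -
  have "x \<notin> S" using assms by auto
  then have "sorted_list_of_set (insert x S) = insort x (sorted_list_of_set S)"
    using assms by (simp add: sorted_list_of_set_insert)
  also have "\<dots> = sorted_list_of_set S @ [x]"
    using assms by (intro sorted_insort_is_snoc) auto
  finally show ?thesis unfolding desc_def by simp
qed

lemma set_desc[simp]: "finite S \<Longrightarrow> set (desc S) = S"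
  unfolding desc_def by simp

lemma desc_zeros_Suc:
  "desc (zeros (Suc n) v) = (if v (Suc n) = 0 then Suc n # desc (zeros n v) else desc (zeros n v))"
proof -
  have "\<forall>y\<in>zeros n v. y < Suc n" using zeros_le[of _ n v] by (simp add: le_imp_less_Suc)
  then show ?thesis by (simp add: zeros_Suc desc_insert)
qed

lemma realz_Suc:
  "realz (Suc n) u w \<longleftrightarrow> realz n u w \<and> (w (Suc n) \<noteq> 0 \<longrightarrow> act u w (Suc n))"
proof -
  have e: "{1..Suc n} = insert (Suc n) {1..n}" by auto
  show ?thesis unfolding realz_def e by (auto simp del: act.simps)
qed

lemma good_iff_realz:
  "goodS (desc (zeros n u)) (zeros n w) \<longleftrightarrow> realz n u w"
proof (induction n arbitrary: w)
  case 0
  have "zeros 0 u = {}" unfolding zeros_def by auto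
  then show ?case by (simp add: realz_def desc_def)
next
  case (Suc n)
  let ?xs = "desc (zeros n u)"
  have lt: "\<forall>i\<in>set ?xs. i < Suc n" using zeros_le[of _ n u] by (simp add: le_imp_less_Suc)
  have zw: "zeros (Suc n) w - {Suc n} = zeros n w"
    unfolding zeros_def by auto
  show ?case
  proof (cases "u (Suc n) = 0")
    case False
    have "goodS (desc (zeros (Suc n) u)) (zeros (Suc n) w) = goodS ?xs (zeros (Suc n) w)"
      using False by (simp add: desc_zeros_Suc)
    also have "\<dots> = goodS ?xs (zeros (Suc n) w - {Suc n})"
      by (rule goodS_drop[OF lt])
    also have "\<dots> = goodS ?xs (zeros n w)" unfolding zw ..
    also have "\<dots> = realz n u w" by (rule Suc.IH)
    finally show ?thesis using False by (simp add: realz_Suc)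
  next
    case u0: True
    show ?thesis
    proof (cases "w (Suc n) = 0")
      case True
      have "Suc n \<in> zeros (Suc n) w" using True by (simp add: zeros_def)
      then have "goodS (desc (zeros (Suc n) u)) (zeros (Suc n) w) = goodS ?xs (zeros n w)"
        using u0 zw by (simp add: desc_zeros_Suc)
      also have "\<dots> = realz n u w" by (rule Suc.IH)
      finally show ?thesis using True by (simp add: realz_Suc)
    next
      case w1: False
      have nin: "Suc n \<notin> zeros (Suc n) w" using w1 by (simp add: zeros_def)
      show ?thesis
      proof (cases "1 \<le> n \<and> w n = 0")
        case True
        let ?w' = "w(n := 1)"
        have inn: "n \<in> zeros (Suc n) w" using True by (simp add: zeros_def)
        have zz: "zeros (Suc n) w - {n} = zeros n ?w'"
          using w1 unfolding zeros_def by (auto simp: le_Suc_eq)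
        have "goodS (desc (zeros (Suc n) u)) (zeros (Suc n) w) = goodS ?xs (zeros n ?w')"
          using u0 nin inn zz by (simp add: desc_zeros_Suc)
        also have "\<dots> = realz n u ?w'" by (rule Suc.IH)
        also have "\<dots> = realz (Suc n) u w"
        proof -
          have ac: "\<And>i. i \<le> n \<Longrightarrow> act u ?w' i = act u w i"
            by (rule act_cong) auto
          have A: "realz n u ?w' \<longleftrightarrow> (\<forall>i\<in>{1..n}. (i \<noteq> n \<longrightarrow> w i \<noteq> 0 \<longrightarrow> act u w i) \<and> (i = n \<longrightarrow> act u w n))"
            unfolding realz_def
          proof (rule ball_cong[OF refl])
            fix i assume "i \<in> {1..n}"
            then have "act u ?w' i = act u w i" using ac by simp
            then show "(?w' i \<noteq> 0 \<longrightarrow> act u ?w' i) = ((i \<noteq> n \<longrightarrow> w i \<noteq> 0 \<longrightarrow> act u w i) \<and> (i = n \<longrightarrow> act u w n))"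
              by auto
          qed
          have nn: "n \<in> {1..n}" using True by simp
          have B: "realz n u ?w' \<longleftrightarrow> (\<forall>i\<in>{1..n}. i \<noteq> n \<longrightarrow> w i \<noteq> 0 \<longrightarrow> act u w i) \<and> act u w n"
            unfolding A using nn by blast
          have C: "act u w (Suc n) = act u w n" using u0 True by simp
          have D: "realz n u w = (\<forall>i\<in>{1..n}. i \<noteq> n \<longrightarrow> w i \<noteq> 0 \<longrightarrow> act u w i)"
            unfolding realz_def using True by auto
          have E: "realz (Suc n) u w \<longleftrightarrow> (\<forall>i\<in>{1..n}. i \<noteq> n \<longrightarrow> w i \<noteq> 0 \<longrightarrow> act u w i) \<and> act u w n"
            unfolding realz_Suc C D using w1 by blast
          show ?thesis using B E by simp
        qed
        finally show ?thesis .
      next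
        case False
        have dz: "desc (zeros (Suc n) u) = Suc n # ?xs" using u0 by (simp add: desc_zeros_Suc)
        have "n \<notin> zeros (Suc n) w" using False by (auto simp: zeros_def)
        then have "\<not> goodS (desc (zeros (Suc n) u)) (zeros (Suc n) w)"
          using nin unfolding dz by simp
        moreover have "\<not> act u w (Suc n)"
          using False u0 by (cases n) auto
        ultimately show ?thesis using w1 by (simp add: realz_Suc)
      qed
    qed
  qed
qed

definition zo :: "nat \<Rightarrow> (nat \<Rightarrow> nat) \<Rightarrow> bool" where
  "zo n u \<longleftrightarrow> (\<forall>i\<in>{1..n}. u i \<le> 1)"

lemma realz_dom_aux:
  assumes "realz n u w" "zo n u" "zo n w" "i \<le> n"
  shows "(\<Sum>k=1..i. w k) + (if act u w i \<and> w i = 0 then 1 else 0) \<le> (\<Sum>k=1..i. u k)"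
  using assms(4)
proof (induction i)
  case 0 then show ?case by simp
next
  case (Suc i)
  have IH: "(\<Sum>k=1..i. w k) + (if act u w i \<and> w i = 0 then 1 else 0) \<le> (\<Sum>k=1..i. u k)"
    using Suc by auto
  have "Suc i \<in> {1..n}" using Suc.prems by auto
  then have r: "w (Suc i) \<noteq> 0 \<Longrightarrow> act u w (Suc i)" using assms(1) unfolding realz_def by blast
  have b: "u (Suc i) \<le> 1" "w (Suc i) \<le> 1" using assms(2,3) Suc.prems unfolding zo_def by auto
  have "w (Suc i) + (if act u w (Suc i) \<and> w (Suc i) = 0 then 1 else 0)
        \<le> u (Suc i) + (if act u w i \<and> w i = 0 then 1 else 0)"
    using r b by auto
  then show ?case using IH by (simp add: sum.cl_ivl_Suc )
qed

lemma realz_dom: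
  assumes "realz n u w" "zo n u" "zo n w"
  shows "dominates n u w"
  unfolding dominates_def
proof
  fix i assume "i \<in> {1..n}"
  then show "(\<Sum>k=1..i. w k) \<le> (\<Sum>k=1..i. u k)"
    using realz_dom_aux[OF assms, of i] by auto
qed

lemma chi_zo: "zo n u \<Longrightarrow> i \<in> {1..n} \<Longrightarrow> chi u i = u i"
proof -
  assume "zo n u" "i \<in> {1..n}"
  then have "u i \<le> 1" unfolding zo_def by blast
  then show ?thesis unfolding chi_def by auto
qed

lemma dominates_cong:
  "(\<And>j. j \<in> {1..n} \<Longrightarrow> u j = u' j) \<Longrightarrow> (\<And>j. j \<in> {1..n} \<Longrightarrow> w j = w' j)
   \<Longrightarrow> dominates n u w = dominates n u' w'"
proof -
  assume a: "\<And>j. j \<in> {1..n} \<Longrightarrow> u j = u' j" "\<And>j. j \<in> {1..n} \<Longrightarrow> w j = w' j"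
  have "\<And>i. i \<in> {1..n} \<Longrightarrow> (\<Sum>k=1..i. u k) = (\<Sum>k=1..i. u' k) \<and> (\<Sum>k=1..i. w k) = (\<Sum>k=1..i. w' k)"
    using a by (auto intro!: sum.cong)
  then show ?thesis unfolding dominates_def by auto
qed

lemma dominates1_iff_realz:
  assumes "zo n u" "zo n w"
  shows "dominates1 n u w \<longleftrightarrow> realz n u w"
proof -
  have g: "okM (greedy_match (rev (sorted_list_of_set (zeros n u)))
                        (rev (sorted_list_of_set (zeros n w)))) = realz n u w"
    using goodL[of "rev (sorted_list_of_set (zeros n w))" "rev (sorted_list_of_set (zeros n u))"]
      good_iff_realz[of n u w] by (simp add: desc_def)
  have c: "dominates n (chi u) (chi w) = dominates n u w"
    by (rule dominates_cong) (use chi_zo assms in auto)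
  show ?thesis unfolding dominates1_def okM_def[symmetric] g c using realz_dom[OF _ assms] by auto
qed


lemma ind_Suc: "ind (Suc n) u = ind n u + u (Suc n) * 2 ^ n"
  unfolding ind_def by (simp add: sum.cl_ivl_Suc)

lemma ind_cong: "(\<And>i. i \<in> {1..n} \<Longrightarrow> u i = v i) \<Longrightarrow> ind n u = ind n v"
  unfolding ind_def by (auto intro!: sum.cong)

lemma bitvec_zo: "zo n (bitvec r)"
  unfolding zo_def bitvec_def by auto

lemma bit_mod_low: "k < n \<Longrightarrow> bit ((r::nat) mod 2 ^ n) k = bit r k"
  by (metis bit_take_bit_iff take_bit_eq_mod)

lemma ind_bitvec: "r < 2 ^ n \<Longrightarrow> ind n (bitvec r) = r"
proof (induction n arbitrary: r)
  case 0 then show ?case by (simp add: ind_def)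
next
  case (Suc n)
  have "ind n (bitvec r) = ind n (bitvec (r mod 2 ^ n))"
  proof (rule ind_cong)
    fix i assume "i \<in> {1..n}"
    then have "i - 1 < n" by auto
    then show "bitvec r i = bitvec (r mod 2 ^ n) i"
      unfolding bitvec_def using bit_mod_low by simp
  qed
  also have "\<dots> = r mod 2 ^ n" by (rule Suc.IH) simp
  finally have a: "ind n (bitvec r) = r mod 2 ^ n" .
  have d: "r div 2 ^ n < 2" using Suc.prems by (simp add: div_less_iff_less_mult mult.commute)
  have b: "bitvec r (Suc n) = r div 2 ^ n"
  proof -
    have "r div 2 ^ n = 0 \<or> r div 2 ^ n = 1" using d by linarith
    then show ?thesis unfolding bitvec_def by (auto simp: bit_iff_odd)
  qed
  show ?case unfolding ind_Suc a b by (simp add: mult.commute)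
qed

lemma ind_lt: "zo n u \<Longrightarrow> ind n u < 2 ^ n"
proof (induction n)
  case 0 then show ?case by (simp add: ind_def)
next
  case (Suc n)
  have "zo n u" using Suc.prems unfolding zo_def by auto
  then have "ind n u < 2 ^ n" by (rule Suc.IH)
  moreover have "u (Suc n) \<le> 1" using Suc.prems unfolding zo_def by auto
  ultimately have "ind n u + u (Suc n) * 2 ^ n < 2 ^ n + 1 * 2 ^ n"
    by (metis add_less_le_mono mult_le_mono1)
  then show ?case unfolding ind_Suc by simp
qed

lemma bitvec_ind: "zo n u \<Longrightarrow> i \<in> {1..n} \<Longrightarrow> bitvec (ind n u) i = u i"
proof (induction n arbitrary: i)
  case 0 then show ?case by simp
next
  case (Suc n)
  have zn: "zo n u" using Suc.prems unfolding zo_def by auto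
  have x: "ind n u < 2 ^ n" by (rule ind_lt[OF zn])
  have us: "u (Suc n) \<le> 1" using Suc.prems unfolding zo_def by auto
  let ?y = "ind n u + u (Suc n) * 2 ^ n"
  have ymod: "?y mod 2 ^ n = ind n u" using x by simp
  have ydiv: "?y div 2 ^ n = u (Suc n)" using x by simp
  show ?case
  proof (cases "i = Suc n")
    case True
    have "bit ?y n = odd (u (Suc n))" by (simp add: bit_iff_odd ydiv)
    then show ?thesis unfolding ind_Suc bitvec_def True using us by (cases "u (Suc n)") auto
  next
    case False
    then have i: "i \<in> {1..n}" using Suc.prems by auto
    then have "i - 1 < n" by auto
    then have "bit ?y (i - 1) = bit (ind n u) (i - 1)"
      using bit_mod_low[of "i - 1" n ?y] ymod by simp
    then have "bitvec (ind (Suc n) u) i = bitvec (ind n u) i"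
      unfolding ind_Suc bitvec_def by simp
    then show ?thesis using Suc.IH[OF zn i] by simp
  qed
qed

lemma A_entry:
  assumes "r < 2 ^ n" "c < 2 ^ n"
  shows "A_mat n $$ (r, c) = (if realz n (bitvec r) (bitvec c) then 1 else 0)"
  unfolding A_mat_def using assms dominates1_iff_realz[OF bitvec_zo bitvec_zo] by simp

lemma A_dom:
  assumes "r < 2 ^ n" "c < 2 ^ n" "A_mat n $$ (r, c) \<noteq> 0"
  shows "dominates n (bitvec r) (bitvec c)"
  using assms A_entry[OF assms(1,2)] realz_dom[OF _ bitvec_zo bitvec_zo] by (auto split: if_splits)

lemma A_diag: "r < 2 ^ n \<Longrightarrow> A_mat n $$ (r, r) = 1"
proof -
  assume r: "r < 2 ^ n"
  have "realz n (bitvec r) (bitvec r)"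
    unfolding realz_def
  proof (intro ballI impI)
    fix i assume "i \<in> {1..n}" "bitvec r i \<noteq> 0"
    then show "act (bitvec r) (bitvec r) i" by (cases i) auto
  qed
  then show ?thesis using A_entry[OF r r] by simp
qed

lemma A_01: "r < 2 ^ n \<Longrightarrow> c < 2 ^ n \<Longrightarrow> A_mat n $$ (r, c) = 0 \<or> A_mat n $$ (r, c) = 1"
  using A_entry by auto


definition Rf :: "(gvert \<times> gvert \<Rightarrow> real) \<Rightarrow> nat \<Rightarrow> nat \<Rightarrow> real" where
  "Rf f i j = f (Node i j, Node i (Suc j))"

definition dn :: "nat \<Rightarrow> nat \<Rightarrow> nat \<Rightarrow> gvert" where
  "dn n i j = (if i < n then Node (Suc i) j else Sink)"

definition Df :: "nat \<Rightarrow> (gvert \<times> gvert \<Rightarrow> real) \<Rightarrow> nat \<Rightarrow> nat \<Rightarrow> real" where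
  "Df n f i j = f (Node i j, dn n i j)"

definition inflow :: "nat \<Rightarrow> (gvert \<times> gvert \<Rightarrow> real) \<Rightarrow> nat \<Rightarrow> nat \<Rightarrow> real" where
  "inflow n f i j = (if 0 < j then Rf f i (j - 1) else 0) + (if 1 < i then Df n f (i - 1) j else 0)"

definition zoff :: "nat \<Rightarrow> nat \<Rightarrow> (gvert \<times> gvert \<Rightarrow> real) \<Rightarrow> bool" where
  "zoff n m f \<longleftrightarrow> (\<forall>e. e \<notin> G_edges n m \<longrightarrow> f e = 0)"

definition nodeeq :: "nat \<Rightarrow> nat \<Rightarrow> (nat \<Rightarrow> nat \<Rightarrow> real) \<Rightarrow> (gvert \<times> gvert \<Rightarrow> real) \<Rightarrow> bool" where
  "nodeeq n m s f \<longleftrightarrow> (\<forall>i j. 1 \<le> i \<longrightarrow> i \<le> n \<longrightarrow> j \<le> m \<longrightarrow>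
      Rf f i j + Df n f i j = s i j + inflow n f i j)"

definition sa :: "(nat \<Rightarrow> nat) \<Rightarrow> nat \<Rightarrow> nat \<Rightarrow> real" where
  "sa a i j = (if j = 0 then real (a i) else 0)"

lemma right_edge: "1 \<le> i \<Longrightarrow> i \<le> n \<Longrightarrow> j < m \<Longrightarrow> (Node i j, Node i (Suc j)) \<in> G_edges n m"
  unfolding G_edges_def by auto

lemma right_edge_not: "m \<le> j \<Longrightarrow> (Node i j, Node i (Suc j)) \<notin> G_edges n m"
  unfolding G_edges_def by auto

lemma dn_edge: "1 \<le> i \<Longrightarrow> i \<le> n \<Longrightarrow> j \<le> m \<Longrightarrow> (Node i j, dn n i j) \<in> G_edges n m"
proof -
  assume a: "1 \<le> i" "i \<le> n" "j \<le> m"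
  show ?thesis
  proof (cases "i < n")
    case True
    then have "(Node i j, dn n i j) = (Node i j, Node (i + 1) j)" unfolding dn_def by simp
    moreover have "(Node i j, Node (i + 1) j) \<in> G_edges n m" unfolding G_edges_def using a True by auto
    ultimately show ?thesis by simp
  next
    case False
    then have "(Node i j, dn n i j) = (Node n j, Sink)" "i = n" unfolding dn_def using a by auto
    moreover have "(Node n j, Sink) \<in> G_edges n m" unfolding G_edges_def using a by auto
    ultimately show ?thesis by simp
  qed
qed



lemma edges_iff:
  assumes "1 \<le> n"
  shows "e \<in> G_edges n m \<longleftrightarrow>
     (\<exists>i j. 1 \<le> i \<and> i \<le> n \<and> j < m \<and> e = (Node i j, Node i (Suc j))) \<or>
     (\<exists>i j. 1 \<le> i \<and> i \<le> n \<and> j \<le> m \<and> e = (Node i j, dn n i j))"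
proof
  assume "e \<in> G_edges n m"
  then show "(\<exists>i j. 1 \<le> i \<and> i \<le> n \<and> j < m \<and> e = (Node i j, Node i (Suc j))) \<or>
     (\<exists>i j. 1 \<le> i \<and> i \<le> n \<and> j \<le> m \<and> e = (Node i j, dn n i j))"
  proof -
    from \<open>e \<in> G_edges n m\<close> consider
        (r) i j where "1 \<le> i" "i \<le> n" "j \<le> m - 1" "1 \<le> m" "e = (Node i j, Node i (j + 1))"
      | (d) i j where "1 \<le> i" "i \<le> n - 1" "j \<le> m" "e = (Node i j, Node (i + 1) j)"
      | (s) j where "j \<le> m" "e = (Node n j, Sink)"
      unfolding G_edges_def by blast
    then show ?thesis
    proof cases
      case r
      then have "1 \<le> i \<and> i \<le> n \<and> j < m \<and> e = (Node i j, Node i (Suc j))" by auto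
      then show ?thesis by blast
    next
      case d
      then have "1 \<le> i \<and> i \<le> n \<and> j \<le> m \<and> e = (Node i j, dn n i j)" unfolding dn_def by auto
      then show ?thesis by blast
    next
      case s
      then have "1 \<le> n \<and> n \<le> n \<and> j \<le> m \<and> e = (Node n j, dn n n j)" using assms unfolding dn_def by auto
      then show ?thesis by blast
    qed
  qed
next
  assume "(\<exists>i j. 1 \<le> i \<and> i \<le> n \<and> j < m \<and> e = (Node i j, Node i (Suc j))) \<or>
     (\<exists>i j. 1 \<le> i \<and> i \<le> n \<and> j \<le> m \<and> e = (Node i j, dn n i j))"
  then show "e \<in> G_edges n m"
    using right_edge dn_edge by auto
qed

lemma dn_ne_right[simp]: "dn n i j \<noteq> Node i (Suc j)"
  unfolding dn_def by auto

lemma finite_edges: assumes "1 \<le> n" shows "finite (G_edges n m)"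
proof -
  have "G_edges n m \<subseteq> (\<lambda>(i,j). (Node i j, Node i (Suc j))) ` ({1..n} \<times> {0..<m})
        \<union> (\<lambda>(i,j). (Node i j, dn n i j)) ` ({1..n} \<times> {0..m})"
    using edges_iff[OF assms] by fastforce
  then show ?thesis by (rule finite_subset) auto
qed

lemma G_vertices_eq: "G_vertices n m = (\<lambda>(i,j). Node i j) ` ({1..n} \<times> {0..m}) \<union> {Sink}"
  unfolding G_vertices_def by auto

lemma finite_vertices: "finite (G_vertices n m)"
  unfolding G_vertices_eq by auto

lemma edges_in_vertices:
  assumes "1 \<le> n" "e \<in> G_edges n m"
  shows "fst e \<in> G_vertices n m" "snd e \<in> G_vertices n m"
  using assms unfolding edges_iff[OF assms(1)] G_vertices_def by (auto simp: dn_def split: if_splits)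

lemma out_set:
  assumes "1 \<le> i" "i \<le> n" "j \<le> m"
  shows "{e \<in> G_edges n m. fst e = Node i j} =
    (if j < m then {(Node i j, Node i (Suc j))} else {}) \<union> {(Node i j, dn n i j)}"
proof (rule Set.set_eqI, rule iffI)
  have n: "1 \<le> n" using assms by simp
  fix e assume "e \<in> {e \<in> G_edges n m. fst e = Node i j}"
  then have "e \<in> G_edges n m" "fst e = Node i j" by auto
  then show "e \<in> (if j < m then {(Node i j, Node i (Suc j))} else {}) \<union> {(Node i j, dn n i j)}"
    unfolding edges_iff[OF n] by auto
next
  fix e assume "e \<in> (if j < m then {(Node i j, Node i (Suc j))} else {}) \<union> {(Node i j, dn n i j)}"
  then show "e \<in> {e \<in> G_edges n m. fst e = Node i j}"
    using right_edge[OF assms(1,2)] dn_edge[OF assms] by (auto split: if_splits)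
qed

lemma in_set:
  assumes "1 \<le> i" "i \<le> n" "j \<le> m"
  shows "{e \<in> G_edges n m. snd e = Node i j} =
    (if 0 < j then {(Node i (j - 1), Node i j)} else {}) \<union> (if 1 < i then {(Node (i - 1) j, Node i j)} else {})"
proof -
  have n: "1 \<le> n" using assms by simp
  show ?thesis
  proof (rule Set.set_eqI, rule iffI)
    fix e assume "e \<in> {e \<in> G_edges n m. snd e = Node i j}"
    then show "e \<in> (if 0 < j then {(Node i (j - 1), Node i j)} else {}) \<union> (if 1 < i then {(Node (i - 1) j, Node i j)} else {})"
      unfolding edges_iff[OF n] dn_def by (auto split: if_splits)
  next
    fix e assume e: "e \<in> (if 0 < j then {(Node i (j - 1), Node i j)} else {}) \<union> (if 1 < i then {(Node (i - 1) j, Node i j)} else {})"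
    show "e \<in> {e \<in> G_edges n m. snd e = Node i j}"
    proof (cases "0 < j \<and> e = (Node i (j - 1), Node i j)")
      case True
      then show ?thesis using right_edge[of i n "j - 1" m] assms by auto
    next
      case False
      then have "1 < i" "e = (Node (i - 1) j, Node i j)" using e by (auto split: if_splits)
      moreover have "dn n (i - 1) j = Node i j" using \<open>1 < i\<close> assms unfolding dn_def by auto
      ultimately show ?thesis using dn_edge[of "i - 1" n j m] assms by auto
    qed
  qed
qed

lemma netflow_node:
  assumes "1 \<le> i" "i \<le> n" "j \<le> m" "zoff n m f"
  shows "netflow n m f (Node i j) = Rf f i j + Df n f i j - inflow n f i j"
proof -
  have o: "(\<Sum>e\<in>{e \<in> G_edges n m. fst e = Node i j}. f e) = Rf f i j + Df n f i j"
  proof (cases "j < m")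
    case True
    then show ?thesis unfolding out_set[OF assms(1-3)] Rf_def Df_def by simp
  next
    case False
    then have "Rf f i j = 0" using assms(4) right_edge_not[of m j i n] unfolding zoff_def Rf_def by auto
    then show ?thesis unfolding out_set[OF assms(1-3)] Df_def using False by simp
  qed
  have d: "1 < i \<Longrightarrow> dn n (i - 1) j = Node i j" using assms unfolding dn_def by auto
  have i: "(\<Sum>e\<in>{e \<in> G_edges n m. snd e = Node i j}. f e) = inflow n f i j"
    unfolding in_set[OF assms(1-3)] inflow_def Rf_def Df_def
    using d by (cases "0 < j"; cases "1 < i") auto
  show ?thesis unfolding netflow_def o i ..
qed

lemma netflow_sum_zero:
  assumes "1 \<le> n"
  shows "(\<Sum>x\<in>G_vertices n m. netflow n m f x) = 0"
proof -
  have fe: "finite (G_edges n m)" by (rule finite_edges[OF assms])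
  have a: "(\<Sum>x\<in>G_vertices n m. \<Sum>e\<in>{e \<in> G_edges n m. fst e = x}. f e) = sum f (G_edges n m)"
    by (rule sum.group[OF fe finite_vertices]) (use edges_in_vertices[OF assms] in auto)
  have b: "(\<Sum>x\<in>G_vertices n m. \<Sum>e\<in>{e \<in> G_edges n m. snd e = x}. f e) = sum f (G_edges n m)"
    by (rule sum.group[OF fe finite_vertices]) (use edges_in_vertices[OF assms] in auto)
  show ?thesis unfolding netflow_def sum_subtractf a b by simp
qed

lemma netflow_sink:
  assumes "1 \<le> n"
  shows "netflow n m f Sink = - (\<Sum>i=1..n. \<Sum>j=0..m. netflow n m f (Node i j))"
proof -
  have "G_vertices n m = insert Sink ((\<lambda>(i,j). Node i j) ` ({1..n} \<times> {0..m}))"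
    unfolding G_vertices_eq by auto
  moreover have "Sink \<notin> (\<lambda>(i,j). Node i j) ` ({1..n} \<times> {0..m})" by auto
  ultimately have "(\<Sum>x\<in>G_vertices n m. netflow n m f x) =
      netflow n m f Sink + (\<Sum>x\<in>(\<lambda>(i,j). Node i j) ` ({1..n} \<times> {0..m}). netflow n m f x)"
    by simp
  also have "(\<Sum>x\<in>(\<lambda>(i,j). Node i j) ` ({1..n} \<times> {0..m}). netflow n m f x)
     = (\<Sum>(i,j)\<in>{1..n} \<times> {0..m}. netflow n m f (Node i j))"
    by (subst sum.reindex) (auto simp: inj_on_def case_prod_beta)
  also have "\<dots> = (\<Sum>i=1..n. \<Sum>j=0..m. netflow n m f (Node i j))"
    by (rule sum.cartesian_product[symmetric])
  finally show ?thesis using netflow_sum_zero[OF assms, of m f] by simp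
qed

lemma poly_iff:
  assumes "1 \<le> n"
  shows "f \<in> flow_polytope n m a \<longleftrightarrow>
    zoff n m f \<and> (\<forall>e\<in>G_edges n m. 0 \<le> f e) \<and> nodeeq n m (sa a) f"
proof
  assume f: "f \<in> flow_polytope n m a"
  then have z: "zoff n m f" unfolding flow_polytope_def zoff_def by auto
  have "nodeeq n m (sa a) f"
    unfolding nodeeq_def
  proof (intro allI impI)
    fix i j assume ij: "1 \<le> i" "i \<le> n" "j \<le> m"
    then have "Node i j \<in> G_vertices n m" unfolding G_vertices_def by auto
    then have "netflow n m f (Node i j) = flow_supply n a (Node i j)"
      using f unfolding flow_polytope_def by auto
    then show "Rf f i j + Df n f i j = sa a i j + inflow n f i j"
      using netflow_node[OF ij z] unfolding flow_supply_def sa_def by auto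
  qed
  then show "zoff n m f \<and> (\<forall>e\<in>G_edges n m. 0 \<le> f e) \<and> nodeeq n m (sa a) f"
    using f z unfolding flow_polytope_def by auto
next
  assume h: "zoff n m f \<and> (\<forall>e\<in>G_edges n m. 0 \<le> f e) \<and> nodeeq n m (sa a) f"
  have nd: "\<And>i j. 1 \<le> i \<Longrightarrow> i \<le> n \<Longrightarrow> j \<le> m \<Longrightarrow> netflow n m f (Node i j) = sa a i j"
    using h netflow_node unfolding nodeeq_def by fastforce
  have "\<forall>x\<in>G_vertices n m. netflow n m f x = flow_supply n a x"
  proof
    fix x assume x: "x \<in> G_vertices n m"
    show "netflow n m f x = flow_supply n a x"
    proof (cases x)
      case (Node i j)
      then have "1 \<le> i" "i \<le> n" "j \<le> m" using x unfolding G_vertices_def by auto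
      then show ?thesis using nd Node unfolding flow_supply_def sa_def by auto
    next
      case Sink
      have "netflow n m f Sink = - (\<Sum>i=1..n. \<Sum>j=0..m. sa a i j)"
        unfolding netflow_sink[OF assms] using nd by (auto intro!: sum.cong)
      also have "(\<Sum>i=1..n. \<Sum>j=0..m. sa a i j) = (\<Sum>i=1..n. real (a i))"
        unfolding sa_def by (intro sum.cong refl) (simp add: sum.delta)
      finally show ?thesis using Sink unfolding flow_supply_def by simp
    qed
  qed
  then show "f \<in> flow_polytope n m a"
    using h unfolding flow_polytope_def zoff_def by auto
qed


definition single :: "nat \<Rightarrow> nat \<Rightarrow> (gvert \<times> gvert \<Rightarrow> real) \<Rightarrow> bool" where
  "single n m f \<longleftrightarrow> (\<forall>i j. 1 \<le> i \<longrightarrow> i \<le> n \<longrightarrow> j \<le> m \<longrightarrow> Rf f i j = 0 \<or> Df n f i j = 0)"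

lemma Rf_m: "zoff n m f \<Longrightarrow> m \<le> j \<Longrightarrow> Rf f i j = 0"
proof -
  assume z: "zoff n m f" and j: "m \<le> j"
  have "(Node i j, Node i (Suc j)) \<notin> G_edges n m" by (rule right_edge_not[OF j])
  then show ?thesis using z unfolding zoff_def Rf_def by simp
qed

lemma Rf_nonneg:
  "\<forall>e\<in>G_edges n m. 0 \<le> f e \<Longrightarrow> zoff n m f \<Longrightarrow> 1 \<le> i \<Longrightarrow> i \<le> n \<Longrightarrow> 0 \<le> Rf f i j"
proof -
  assume a: "\<forall>e\<in>G_edges n m. 0 \<le> f e" "zoff n m f" "1 \<le> i" "i \<le> n"
  show ?thesis
  proof (cases "j < m")
    case True
    then have "(Node i j, Node i (Suc j)) \<in> G_edges n m" using right_edge a by blast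
    then show ?thesis using a(1) unfolding Rf_def by blast
  next
    case False
    then show ?thesis using Rf_m[OF a(2)] by simp
  qed
qed

lemma Df_nonneg:
  "\<forall>e\<in>G_edges n m. 0 \<le> f e \<Longrightarrow> 1 \<le> i \<Longrightarrow> i \<le> n \<Longrightarrow> j \<le> m \<Longrightarrow> 0 \<le> Df n f i j"
  using dn_edge[of i n j m] unfolding Df_def by blast

lemma edge_cases:
  assumes "1 \<le> n" "e \<in> G_edges n m"
  shows "(\<exists>i j. 1 \<le> i \<and> i \<le> n \<and> j < m \<and> e = (Node i j, Node i (Suc j))) \<or>
     (\<exists>i j. 1 \<le> i \<and> i \<le> n \<and> j \<le> m \<and> e = (Node i j, dn n i j))"
  using assms(2) unfolding edges_iff[OF assms(1)] .

lemma flow_ext: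
  assumes n: "1 \<le> n" and zf: "zoff n m f" and zg: "zoff n m g"
    and R: "\<And>i j. 1 \<le> i \<Longrightarrow> i \<le> n \<Longrightarrow> j < m \<Longrightarrow> Rf f i j = Rf g i j"
    and D: "\<And>i j. 1 \<le> i \<Longrightarrow> i \<le> n \<Longrightarrow> j \<le> m \<Longrightarrow> Df n f i j = Df n g i j"
  shows "f = g"
proof (rule ext)
  fix e show "f e = g e"
  proof (cases "e \<in> G_edges n m")
    case True
    from edge_cases[OF n True] show ?thesis
    proof (elim disjE exE conjE)
      fix i j assume "1 \<le> i" "i \<le> n" "j < m" "e = (Node i j, Node i (Suc j))"
      then show ?thesis using R[of i j] unfolding Rf_def by simp
    next
      fix i j assume "1 \<le> i" "i \<le> n" "j \<le> m" "e = (Node i j, dn n i j)"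
      then show ?thesis using D[of i j] unfolding Df_def by simp
    qed
  next
    case False
    have "f e = 0" using zf False unfolding zoff_def by blast
    moreover have "g e = 0" using zg False unfolding zoff_def by blast
    ultimately show ?thesis by simp
  qed
qed

lemma uniq:
  assumes n: "1 \<le> n" and f: "f \<in> flow_polytope n m a" and g: "g \<in> flow_polytope n m a"
    and c: "\<And>i j. 1 \<le> i \<Longrightarrow> i \<le> n \<Longrightarrow> j \<le> m \<Longrightarrow>
       (Rf f i j = 0 \<and> Rf g i j = 0) \<or> (Df n f i j = 0 \<and> Df n g i j = 0)"
  shows "f = g"
proof -
  have F: "zoff n m f" "nodeeq n m (sa a) f" using f poly_iff[OF n] by auto
  have G: "zoff n m g" "nodeeq n m (sa a) g" using g poly_iff[OF n] by auto
  have main: "\<forall>i j. i + j = k \<longrightarrow> 1 \<le> i \<longrightarrow> i \<le> n \<longrightarrow> j \<le> m \<longrightarrow>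
      Rf f i j = Rf g i j \<and> Df n f i j = Df n g i j" for k
  proof (induction k rule: less_induct)
    case (less k)
    show ?case
    proof (intro allI impI)
      fix i j assume ij: "i + j = k" "1 \<le> i" "i \<le> n" "j \<le> m"
      have inf: "inflow n f i j = inflow n g i j"
      proof -
        have "0 < j \<Longrightarrow> Rf f i (j - 1) = Rf g i (j - 1)"
          using less.IH[of "i + (j - 1)"] ij by auto
        moreover have "1 < i \<Longrightarrow> Df n f (i - 1) j = Df n g (i - 1) j"
          using less.IH[of "(i - 1) + j"] ij by auto
        ultimately show ?thesis unfolding inflow_def by auto
      qed
      have "Rf f i j + Df n f i j = Rf g i j + Df n g i j"
        using F(2) G(2) ij inf unfolding nodeeq_def by auto
      then show "Rf f i j = Rf g i j \<and> Df n f i j = Df n g i j"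
        using c[OF ij(2-4)] by auto
    qed
  qed
  show ?thesis
    by (rule flow_ext[OF n F(1) G(1)]) (use main in auto)
qed

lemma single_vertex:
  assumes n: "1 \<le> n" and f: "f \<in> flow_polytope n m a" and s: "single n m f"
  shows "is_vertex (flow_polytope n m a) f"
  unfolding is_vertex_def
proof (intro conjI ballI allI impI)
  show "f \<in> flow_polytope n m a" by (rule f)
  fix g h t assume g: "g \<in> flow_polytope n m a" and h: "h \<in> flow_polytope n m a"
    and t: "0 < t \<and> t < 1 \<and> f = (\<lambda>e. (1 - t) * g e + t * h e)"
  have gz: "\<And>e. f e = 0 \<Longrightarrow> g e = 0 \<and> h e = 0"
  proof -
    fix e assume fe: "f e = 0"
    show "g e = 0 \<and> h e = 0"
    proof (cases "e \<in> G_edges n m")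
      case True
      then have "0 \<le> g e" "0 \<le> h e" using g h poly_iff[OF n] by auto
      moreover have "(1 - t) * g e + t * h e = 0"
      proof -
        have "f e = (1 - t) * g e + t * h e" using t by simp
        then show ?thesis using fe by simp
      qed
      moreover have "0 < 1 - t" "0 < t" using t by auto
      ultimately have "(1 - t) * g e = 0" "t * h e = 0"
        by (smt (verit) mult_nonneg_nonneg)+
      then show ?thesis using \<open>0 < 1 - t\<close> \<open>0 < t\<close> by simp
    next
      case False
      have "zoff n m g" "zoff n m h" using g h poly_iff[OF n] by auto
      then show ?thesis using False unfolding zoff_def by blast
    qed
  qed
  have c: "\<And>k. k \<in> flow_polytope n m a \<Longrightarrow> (\<forall>e. f e = 0 \<longrightarrow> k e = 0) \<Longrightarrow> f = k"
  proof -
    fix k assume k: "k \<in> flow_polytope n m a" "\<forall>e. f e = 0 \<longrightarrow> k e = 0"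
    show "f = k"
    proof (rule uniq[OF n f k(1)])
      fix i j assume ij: "1 \<le> i" "i \<le> n" "j \<le> m"
      show "(Rf f i j = 0 \<and> Rf k i j = 0) \<or> (Df n f i j = 0 \<and> Df n k i j = 0)"
      proof -
        have "Rf f i j = 0 \<or> Df n f i j = 0" using s ij unfolding single_def by blast
        moreover have "Rf f i j = 0 \<Longrightarrow> Rf k i j = 0" using k(2) unfolding Rf_def by blast
        moreover have "Df n f i j = 0 \<Longrightarrow> Df n k i j = 0" using k(2) unfolding Df_def by blast
        ultimately show ?thesis by blast
      qed
    qed
  qed
  have "f = g" by (rule c[OF g]) (use gz in auto)
  moreover have "f = h" by (rule c[OF h]) (use gz in auto)
  ultimately show "g = h" by simp
qed

section \<open>Routing flows\<close>

function rtot :: "(nat \<Rightarrow> nat \<Rightarrow> bool) \<Rightarrow> (nat \<Rightarrow> nat \<Rightarrow> real) \<Rightarrow> nat \<Rightarrow> nat \<Rightarrow> real" where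
  "rtot ch s i j = s i j + (if 0 < j \<and> ch i (j - 1) then rtot ch s i (j - 1) else 0)
      + (if 1 < i \<and> \<not> ch (i - 1) j then rtot ch s (i - 1) j else 0)"
  by pat_completeness auto
termination by (relation "measure (\<lambda>(ch, s, i, j). i + j)") auto

declare rtot.simps[simp del]

lemma rtot_nonneg: "(\<And>i j. 0 \<le> s i j) \<Longrightarrow> 0 \<le> rtot ch s i j"
proof (induction ch s i j rule: rtot.induct)
  case (1 ch s i j)
  show ?case
    by (subst rtot.simps) (use 1 in \<open>auto intro!: add_nonneg_nonneg\<close>)
qed

lemma rtot_zero: "(\<And>i' j'. i' \<le> i \<Longrightarrow> j' \<le> j \<Longrightarrow> s i' j' = 0) \<Longrightarrow> rtot ch s i j = 0"
proof (induction ch s i j rule: rtot.induct)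
  case (1 ch s i j)
  have a: "0 < j \<and> ch i (j - 1) \<Longrightarrow> rtot ch s i (j - 1) = 0"
    using 1 by auto
  have b: "1 < i \<and> \<not> ch (i - 1) j \<Longrightarrow> rtot ch s (i - 1) j = 0"
    using 1 by auto
  show ?case
    by (subst rtot.simps) (use a b 1(3)[of i j] in auto)
qed

definition rflow :: "nat \<Rightarrow> nat \<Rightarrow> (nat \<Rightarrow> nat \<Rightarrow> bool) \<Rightarrow> (nat \<Rightarrow> nat \<Rightarrow> real) \<Rightarrow> gvert \<times> gvert \<Rightarrow> real" where
  "rflow n m ch s e = (if e \<in> G_edges n m then
     (case fst e of Node i j \<Rightarrow>
        (if snd e = Node i (Suc j) then (if ch i j then rtot ch s i j else 0)
         else (if ch i j then 0 else rtot ch s i j))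
      | Sink \<Rightarrow> 0) else 0)"

lemma Rf_rflow:
  "1 \<le> i \<Longrightarrow> i \<le> n \<Longrightarrow> Rf (rflow n m ch s) i j = (if j < m \<and> ch i j then rtot ch s i j else 0)"
  unfolding Rf_def rflow_def using right_edge[of i n j m] right_edge_not[of m j i n] by auto

lemma Df_rflow:
  "1 \<le> i \<Longrightarrow> i \<le> n \<Longrightarrow> j \<le> m \<Longrightarrow> Df n (rflow n m ch s) i j = (if ch i j then 0 else rtot ch s i j)"
  unfolding Df_def rflow_def using dn_edge[of i n j m] by auto

lemma zoff_rflow: "zoff n m (rflow n m ch s)"
  unfolding zoff_def rflow_def by auto

lemma nonneg_rflow: "(\<And>i j. 0 \<le> s i j) \<Longrightarrow> 0 \<le> rflow n m ch s e"
  unfolding rflow_def using rtot_nonneg by (auto split: gvert.split)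

lemma nodeeq_rflow:
  assumes chm: "\<And>i j. ch i j \<Longrightarrow> j < m"
  shows "nodeeq n m s (rflow n m ch s)"
  unfolding nodeeq_def
proof (intro allI impI)
  fix i j assume ij: "1 \<le> i" "i \<le> n" "j \<le> m"
  have l: "Rf (rflow n m ch s) i j + Df n (rflow n m ch s) i j = rtot ch s i j"
    using Rf_rflow[OF ij(1,2)] Df_rflow[OF ij] chm[of i j] by auto
  have r1: "0 < j \<Longrightarrow> Rf (rflow n m ch s) i (j - 1) = (if ch i (j - 1) then rtot ch s i (j - 1) else 0)"
    using Rf_rflow[OF ij(1,2)] ij by auto
  have r2: "1 < i \<Longrightarrow> Df n (rflow n m ch s) (i - 1) j = (if ch (i - 1) j then 0 else rtot ch s (i - 1) j)"
    using Df_rflow[of "i - 1" n j m ch s] ij by auto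
  have "inflow n (rflow n m ch s) i j =
     (if 0 < j \<and> ch i (j - 1) then rtot ch s i (j - 1) else 0)
      + (if 1 < i \<and> \<not> ch (i - 1) j then rtot ch s (i - 1) j else 0)"
    unfolding inflow_def using r1 r2 by auto
  then show "Rf (rflow n m ch s) i j + Df n (rflow n m ch s) i j = s i j + inflow n (rflow n m ch s) i j"
    unfolding l by (subst rtot.simps) simp
qed

lemma single_rflow: "single n m (rflow n m ch s)"
  unfolding single_def using Rf_rflow Df_rflow by auto


lemma nodeeq_comb:
  assumes "nodeeq n m s1 f1" "nodeeq n m s2 f2" "nodeeq n m s3 f3" "nodeeq n m s4 f4"
  shows "nodeeq n m (\<lambda>i j. s1 i j - s2 i j + s3 i j - s4 i j) (\<lambda>e. f1 e - f2 e + f3 e - f4 e)"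
  unfolding nodeeq_def
proof (intro allI impI)
  fix i j assume ij: "1 \<le> i" "i \<le> n" "j \<le> m"
  have e: "Rf f1 i j + Df n f1 i j = s1 i j + inflow n f1 i j"
     "Rf f2 i j + Df n f2 i j = s2 i j + inflow n f2 i j"
     "Rf f3 i j + Df n f3 i j = s3 i j + inflow n f3 i j"
     "Rf f4 i j + Df n f4 i j = s4 i j + inflow n f4 i j"
    using assms ij unfolding nodeeq_def by blast+
  then show "Rf (\<lambda>e. f1 e - f2 e + f3 e - f4 e) i j + Df n (\<lambda>e. f1 e - f2 e + f3 e - f4 e) i j =
       s1 i j - s2 i j + s3 i j - s4 i j + inflow n (\<lambda>e. f1 e - f2 e + f3 e - f4 e) i j"
    unfolding Rf_def Df_def inflow_def
    by (cases "0 < j"; cases "1 < i") (simp_all add: algebra_simps)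
qed

lemma Rf_lin: "Rf (\<lambda>e. f e + c * p e) i j = Rf f i j + c * Rf p i j"
  unfolding Rf_def by simp

lemma Df_lin: "Df n (\<lambda>e. f e + c * p e) i j = Df n f i j + c * Df n p i j"
  unfolding Df_def by simp

lemma inflow_lin: "inflow n (\<lambda>e. f e + c * p e) i j = inflow n f i j + c * inflow n p i j"
  unfolding inflow_def Rf_def Df_def by (simp add: algebra_simps)

lemma nodeeq_lin:
  assumes "nodeeq n m s f" "nodeeq n m s' p"
  shows "nodeeq n m (\<lambda>i j. s i j + c * s' i j) (\<lambda>e. f e + c * p e)"
  unfolding nodeeq_def Rf_lin Df_lin inflow_lin
proof (intro allI impI)
  fix i j assume ij: "1 \<le> i" "i \<le> n" "j \<le> m"
  have e: "Rf f i j + Df n f i j = s i j + inflow n f i j"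
     "Rf p i j + Df n p i j = s' i j + inflow n p i j"
    using assms ij unfolding nodeeq_def by blast+
  have "c * (Rf p i j + Df n p i j) = c * (s' i j + inflow n p i j)" using e(2) by simp
  then have "c * Rf p i j + c * Df n p i j = c * s' i j + c * inflow n p i j"
    by (simp add: distrib_left)
  then show "Rf f i j + c * Rf p i j + (Df n f i j + c * Df n p i j) =
       s i j + c * s' i j + (inflow n f i j + c * inflow n p i j)"
    using e(1) by linarith
qed

definition dlt :: "nat \<times> nat \<Rightarrow> nat \<Rightarrow> nat \<Rightarrow> real" where
  "dlt p i j = (if (i, j) = p then 1 else 0)"

definition eR :: "nat \<Rightarrow> nat \<Rightarrow> gvert \<times> gvert \<Rightarrow> real" where
  "eR i0 j0 e = (if e = (Node i0 j0, Node i0 (Suc j0)) then 1 else 0)"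

definition eD :: "nat \<Rightarrow> nat \<Rightarrow> nat \<Rightarrow> gvert \<times> gvert \<Rightarrow> real" where
  "eD n i0 j0 e = (if e = (Node i0 j0, dn n i0 j0) then 1 else 0)"

lemma dn_Node: "dn n i j = Node i' j' \<longleftrightarrow> i < n \<and> i' = Suc i \<and> j' = j"
  unfolding dn_def by auto

lemma Rf_eR: "Rf (eR i0 j0) i j = dlt (i0, j0) i j"
  unfolding Rf_def eR_def dlt_def by auto

lemma Df_eR: "Df n (eR i0 j0) i j = 0"
  unfolding Df_def eR_def by (auto simp: dn_Node)

lemma inflow_eR: "inflow n (eR i0 j0) i j = dlt (i0, Suc j0) i j"
proof -
  have "(if 0 < j then Rf (eR i0 j0) i (j - 1) else 0) = dlt (i0, Suc j0) i j"
    unfolding Rf_eR dlt_def by auto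
  then show ?thesis unfolding inflow_def Df_eR by simp
qed

lemma Rf_eD: "Rf (eD n i0 j0) i j = 0"
proof -
  have "(Node i j, Node i (Suc j)) \<noteq> (Node i0 j0, dn n i0 j0)"
    by (auto simp: dn_def)
  then show ?thesis unfolding Rf_def eD_def by simp
qed

lemma Df_eD: "Df n (eD n i0 j0) i j = dlt (i0, j0) i j"
proof -
  have "(Node i j, dn n i j) = (Node i0 j0, dn n i0 j0) \<longleftrightarrow> (i, j) = (i0, j0)" by auto
  then show ?thesis unfolding Df_def eD_def dlt_def by simp
qed

lemma inflow_eD: "1 \<le> i0 \<Longrightarrow> inflow n (eD n i0 j0) i j = dlt (Suc i0, j0) i j"
proof -
  assume i0: "1 \<le> i0"
  have "(if 1 < i then Df n (eD n i0 j0) (i - 1) j else 0) = dlt (Suc i0, j0) i j"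
    unfolding Df_eD dlt_def using i0 by auto
  then show ?thesis unfolding inflow_def Rf_eD by simp
qed

lemma nodeeq_eR:
  "nodeeq n m (\<lambda>i j. dlt (i0, j0) i j - dlt (i0, Suc j0) i j) (eR i0 j0)"
  unfolding nodeeq_def Rf_eR Df_eR inflow_eR by simp

lemma nodeeq_eD:
  assumes "1 \<le> i0"
  shows "nodeeq n m (\<lambda>i j. dlt (i0, j0) i j - dlt (Suc i0, j0) i j) (eD n i0 j0)"
  unfolding nodeeq_def Rf_eD Df_eD inflow_eD[OF assms] by simp

lemma rtot_pos_flow:
  assumes n: "1 \<le> n" and f: "f \<in> flow_polytope n m a"
    and hs: "\<And>i j. 1 \<le> i \<Longrightarrow> i \<le> n \<Longrightarrow> j \<le> m \<Longrightarrow> s i j \<noteq> 0 \<Longrightarrow> 0 < inflow n f i j"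
  shows "1 \<le> i \<Longrightarrow> i \<le> n \<Longrightarrow> j \<le> m \<Longrightarrow> rtot (\<lambda>i j. 0 < Rf f i j) s i j \<noteq> 0
           \<Longrightarrow> 0 < Rf f i j + Df n f i j"
proof -
  let ?ch = "\<lambda>i j. 0 < Rf f i j"
  have F: "zoff n m f" "\<forall>e\<in>G_edges n m. 0 \<le> f e" "nodeeq n m (sa a) f" using f poly_iff[OF n] by auto
  have Rnn: "\<And>i j. 1 \<le> i \<Longrightarrow> i \<le> n \<Longrightarrow> 0 \<le> Rf f i j" using Rf_nonneg[OF F(2,1)] by blast
  have Dnn: "\<And>i j. 1 \<le> i \<Longrightarrow> i \<le> n \<Longrightarrow> j \<le> m \<Longrightarrow> 0 \<le> Df n f i j" using Df_nonneg[OF F(2)] by blast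
  have main: "\<forall>i j. i + j = k \<longrightarrow> 1 \<le> i \<longrightarrow> i \<le> n \<longrightarrow> j \<le> m \<longrightarrow> rtot ?ch s i j \<noteq> 0
           \<longrightarrow> 0 < Rf f i j + Df n f i j" for k
  proof (induction k rule: less_induct)
    case (less k)
    show ?case
    proof (intro allI impI)
      fix i j assume ij: "i + j = k" "1 \<le> i" "i \<le> n" "j \<le> m" and nz: "rtot ?ch s i j \<noteq> 0"
      have eq: "Rf f i j + Df n f i j = sa a i j + inflow n f i j" using F(3) ij(2-4) unfolding nodeeq_def by blast
      have sa0: "0 \<le> sa a i j" unfolding sa_def by auto
      have split: "s i j \<noteq> 0 \<or> (0 < j \<and> ?ch i (j - 1)) \<or> ((1 < i \<and> \<not> ?ch (i - 1) j) \<and> rtot ?ch s (i - 1) j \<noteq> 0)"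
      proof (rule ccontr)
        assume a: "\<not> ?thesis"
        have "rtot ?ch s i j = s i j + (if 0 < j \<and> ?ch i (j - 1) then rtot ?ch s i (j - 1) else 0)
           + (if 1 < i \<and> \<not> ?ch (i - 1) j then rtot ?ch s (i - 1) j else 0)"
          by (rule rtot.simps)
        also have "\<dots> = 0" using a by auto
        finally show False using nz by simp
      qed
      have "0 < inflow n f i j"
      proof -
        have d0: "0 \<le> (if 1 < i then Df n f (i - 1) j else 0)" using Dnn ij(2-4) by auto
        have r0: "0 \<le> (if 0 < j then Rf f i (j - 1) else 0)" using Rnn ij(2-4) by auto
        from split consider (s) "s i j \<noteq> 0" | (l) "0 < j" "?ch i (j - 1)"
          | (t) "1 < i" "\<not> ?ch (i - 1) j" "rtot ?ch s (i - 1) j \<noteq> 0" by blast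
        then show ?thesis
        proof cases
          case s then show ?thesis using hs ij(2-4) by blast
        next
          case l
          then have "0 < (if 0 < j then Rf f i (j - 1) else 0)" by simp
          then show ?thesis unfolding inflow_def using d0 by linarith
        next
          case t
          have lt: "(i - 1) + j < k" using ij(1) t(1) by linarith
          have "0 < Rf f (i - 1) j + Df n f (i - 1) j"
            using less.IH[OF lt] t(1,3) ij by auto
          moreover have "Rf f (i - 1) j = 0" using t(1,2) Rnn[of "i - 1" j] ij(3) by auto
          ultimately have "0 < Df n f (i - 1) j" by simp
          then have "0 < (if 1 < i then Df n f (i - 1) j else 0)" using t(1) by simp
          then show ?thesis unfolding inflow_def using r0 by linarith
        qed
      qed
      then show "0 < Rf f i j + Df n f i j" using eq sa0 by linarith
    qed
  qed
  show "1 \<le> i \<Longrightarrow> i \<le> n \<Longrightarrow> j \<le> m \<Longrightarrow> rtot ?ch s i j \<noteq> 0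
           \<Longrightarrow> 0 < Rf f i j + Df n f i j" using main[of "i + j"] by blast
qed

lemma rflow_supp:
  assumes n: "1 \<le> n" and f: "f \<in> flow_polytope n m a"
    and s0: "\<And>i j. 0 \<le> s i j"
    and hs: "\<And>i j. 1 \<le> i \<Longrightarrow> i \<le> n \<Longrightarrow> j \<le> m \<Longrightarrow> s i j \<noteq> 0 \<Longrightarrow> 0 < inflow n f i j"
    and e: "e \<in> G_edges n m" and nz: "rflow n m (\<lambda>i j. 0 < Rf f i j) s e \<noteq> 0"
  shows "0 < f e"
proof -
  have F: "zoff n m f" "\<forall>e\<in>G_edges n m. 0 \<le> f e" using f poly_iff[OF n] by auto
  let ?ch = "\<lambda>i j. 0 < Rf f i j"
  from edge_cases[OF n e] show ?thesis
  proof (elim disjE exE conjE)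
    fix i j assume ij: "1 \<le> i" "i \<le> n" "j < m" and ee: "e = (Node i j, Node i (Suc j))"
    have "Rf (rflow n m ?ch s) i j \<noteq> 0" using nz ee unfolding Rf_def by simp
    then have "?ch i j" using Rf_rflow[OF ij(1,2)] by (auto split: if_splits)
    then show ?thesis using ee unfolding Rf_def by simp
  next
    fix i j assume ij: "1 \<le> i" "i \<le> n" "j \<le> m" and ee: "e = (Node i j, dn n i j)"
    have "Df n (rflow n m ?ch s) i j \<noteq> 0" using nz ee unfolding Df_def by simp
    then have c: "\<not> ?ch i j" "rtot ?ch s i j \<noteq> 0" using Df_rflow[OF ij] by (auto split: if_splits)
    have "0 < Rf f i j + Df n f i j" by (rule rtot_pos_flow[OF n f hs ij c(2)])
    moreover have "0 \<le> Rf f i j" using Rf_nonneg[OF F(2,1) ij(1,2)] .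
    ultimately have "0 < Df n f i j" using c(1) by linarith
    then show ?thesis using ee unfolding Df_def by simp
  qed
qed


lemma vertex_single:
  assumes n: "1 \<le> n" and v: "is_vertex (flow_polytope n m a) f"
  shows "single n m f"
proof (rule ccontr)
  assume "\<not> single n m f"
  then obtain i0 j0 where ij0: "1 \<le> i0" "i0 \<le> n" "j0 \<le> m" "Rf f i0 j0 \<noteq> 0" "Df n f i0 j0 \<noteq> 0"
    unfolding single_def by blast
  have f: "f \<in> flow_polytope n m a" using v unfolding is_vertex_def by blast
  have F: "zoff n m f" "\<forall>e\<in>G_edges n m. 0 \<le> f e" "nodeeq n m (sa a) f" using f poly_iff[OF n] by auto
  have Rnn: "\<And>i j. 1 \<le> i \<Longrightarrow> i \<le> n \<Longrightarrow> 0 \<le> Rf f i j" using Rf_nonneg[OF F(2,1)] by blast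
  have Dnn: "\<And>i j. 1 \<le> i \<Longrightarrow> i \<le> n \<Longrightarrow> j \<le> m \<Longrightarrow> 0 \<le> Df n f i j" using Df_nonneg[OF F(2)] by blast
  have Rpos: "0 < Rf f i0 j0" using Rnn[OF ij0(1,2), of j0] ij0(4) by linarith
  have Dpos: "0 < Df n f i0 j0" using Dnn[OF ij0(1-3)] ij0(5) by linarith
  have jm: "j0 < m"
  proof (rule ccontr)
    assume "\<not> j0 < m"
    then have "Rf f i0 j0 = 0" using Rf_m[OF F(1)] by simp
    then show False using Rpos by simp
  qed
  let ?ch = "\<lambda>i j. 0 < Rf f i j"
  have chm: "\<And>i j. ?ch i j \<Longrightarrow> j < m"
  proof -
    fix i j assume c: "?ch i j"
    show "j < m"
    proof (rule ccontr)
      assume "\<not> j < m"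
      then have "Rf f i j = 0" using Rf_m[OF F(1)] by simp
      then show False using c by simp
    qed
  qed
  define s1 where "s1 = dlt (i0, Suc j0)"
  define s2 where "s2 = dlt (Suc i0, j0)"
  define F1 where "F1 = rflow n m ?ch s1"
  define F2 where "F2 = rflow n m ?ch s2"
  define Phi where "Phi = (\<lambda>e. F1 e - F2 e + eR i0 j0 e - eD n i0 j0 e)"
  define eRe where "eRe = (Node i0 j0, Node i0 (Suc j0))"
  define eDe where "eDe = (Node i0 j0, dn n i0 j0)"
  have eRE: "eRe \<in> G_edges n m" unfolding eRe_def by (rule right_edge[OF ij0(1,2) jm])
  have eDE: "eDe \<in> G_edges n m" unfolding eDe_def by (rule dn_edge[OF ij0(1-3)])
  have eRD: "eRe \<noteq> eDe" unfolding eRe_def eDe_def by (auto simp: dn_def)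
  have s10: "\<And>i j. 0 \<le> s1 i j" unfolding s1_def dlt_def by auto
  have s20: "\<And>i j. 0 \<le> s2 i j" unfolding s2_def dlt_def by auto
  have N: "nodeeq n m (\<lambda>i j. 0) Phi"
  proof -
    have "nodeeq n m (\<lambda>i j. s1 i j - s2 i j + (dlt (i0, j0) i j - s1 i j) - (dlt (i0, j0) i j - s2 i j))
        (\<lambda>e. F1 e - F2 e + eR i0 j0 e - eD n i0 j0 e)"
      unfolding F1_def F2_def
      by (rule nodeeq_comb[OF nodeeq_rflow nodeeq_rflow nodeeq_eR[of n m i0 j0, folded s1_def]
            nodeeq_eD[OF ij0(1), of n m j0, folded s2_def]]) (use chm in blast)+
    moreover have "(\<lambda>i j. s1 i j - s2 i j + (dlt (i0, j0) i j - s1 i j) - (dlt (i0, j0) i j - s2 i j)) = (\<lambda>i j. 0)"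
      by (intro ext) simp
    ultimately show ?thesis unfolding Phi_def by simp
  qed
  have Z: "zoff n m Phi"
    unfolding zoff_def
  proof (intro allI impI)
    fix e assume e: "e \<notin> G_edges n m"
    have "F1 e = 0" "F2 e = 0" using zoff_rflow e unfolding F1_def F2_def zoff_def by blast+
    moreover have "eR i0 j0 e = 0" using e eRE unfolding eR_def eRe_def by auto
    moreover have "eD n i0 j0 e = 0" using e eDE unfolding eD_def eDe_def by auto
    ultimately show "Phi e = 0" unfolding Phi_def by simp
  qed
  have hs1: "\<And>i j. 1 \<le> i \<Longrightarrow> i \<le> n \<Longrightarrow> j \<le> m \<Longrightarrow> s1 i j \<noteq> 0 \<Longrightarrow> 0 < inflow n f i j"
  proof -
    fix i j assume ij: "1 \<le> i" "i \<le> n" "j \<le> m" "s1 i j \<noteq> 0"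
    then have e: "i = i0" "j = Suc j0" unfolding s1_def dlt_def by (auto split: if_splits)
    have "0 \<le> (if 1 < i then Df n f (i - 1) j else 0)" using Dnn ij(1-3) by auto
    then show "0 < inflow n f i j" unfolding inflow_def using e Rpos by simp
  qed
  have hs2: "\<And>i j. 1 \<le> i \<Longrightarrow> i \<le> n \<Longrightarrow> j \<le> m \<Longrightarrow> s2 i j \<noteq> 0 \<Longrightarrow> 0 < inflow n f i j"
  proof -
    fix i j assume ij: "1 \<le> i" "i \<le> n" "j \<le> m" "s2 i j \<noteq> 0"
    then have e: "i = Suc i0" "j = j0" unfolding s2_def dlt_def by (auto split: if_splits)
    have "0 \<le> (if 0 < j then Rf f i (j - 1) else 0)" using Rnn ij(1-3) by auto
    moreover have "1 < i" using e ij0(1) by simp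
    ultimately show "0 < inflow n f i j" unfolding inflow_def using e Dpos by simp
  qed
  have S: "\<And>e. e \<in> G_edges n m \<Longrightarrow> f e = 0 \<Longrightarrow> Phi e = 0"
  proof -
    fix e assume e: "e \<in> G_edges n m" and fe: "f e = 0"
    have "F1 e = 0"
    proof (rule ccontr)
      assume a1: "F1 e \<noteq> 0"
      have "0 < f e" using rflow_supp[where s=s1, OF n f s10 hs1 e] a1 unfolding F1_def by blast
      then show False using fe by simp
    qed
    moreover have "F2 e = 0"
    proof (rule ccontr)
      assume a2: "F2 e \<noteq> 0"
      have "0 < f e" using rflow_supp[where s=s2, OF n f s20 hs2 e] a2 unfolding F2_def by blast
      then show False using fe by simp
    qed
    moreover have "e \<noteq> eRe" using fe Rpos unfolding eRe_def Rf_def by auto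
    moreover have "e \<noteq> eDe" using fe Dpos unfolding eDe_def Df_def by auto
    ultimately show "Phi e = 0" unfolding Phi_def eR_def eD_def eRe_def eDe_def by simp
  qed
  have One: "Phi eRe = 1"
  proof -
    have "rtot ?ch s1 i0 j0 = 0" by (rule rtot_zero) (simp add: s1_def dlt_def)
    then have a: "F1 eRe = 0" using Rf_rflow[OF ij0(1,2), of m ?ch s1 j0] unfolding F1_def eRe_def Rf_def by simp
    have "rtot ?ch s2 i0 j0 = 0" by (rule rtot_zero) (simp add: s2_def dlt_def)
    then have b: "F2 eRe = 0" using Rf_rflow[OF ij0(1,2), of m ?ch s2 j0] unfolding F2_def eRe_def Rf_def by simp
    have c: "eR i0 j0 eRe = 1" unfolding eR_def eRe_def by simp
    have d: "eD n i0 j0 eRe = 0" using eRD unfolding eD_def eDe_def by simp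
    show ?thesis unfolding Phi_def using a b c d by simp
  qed
  have fin: "finite (G_edges n m)" by (rule finite_edges[OF n])
  define K where "K = 1 + (\<Sum>e\<in>G_edges n m. \<bar>Phi e\<bar>)"
  have Kb: "\<And>e. e \<in> G_edges n m \<Longrightarrow> \<bar>Phi e\<bar> < K"
  proof -
    fix e assume "e \<in> G_edges n m"
    then have "\<bar>Phi e\<bar> \<le> (\<Sum>e\<in>G_edges n m. \<bar>Phi e\<bar>)" by (intro member_le_sum fin) auto
    then show "\<bar>Phi e\<bar> < K" unfolding K_def by simp
  qed
  have K0: "0 < K" using Kb[OF eRE] by simp
  define Pp where "Pp = {e \<in> G_edges n m. 0 < f e}"
  have Ppf: "finite Pp" unfolding Pp_def using fin by simp
  have eRP: "eRe \<in> Pp" unfolding Pp_def using eRE Rpos unfolding eRe_def Rf_def by simp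
  define mu where "mu = Min (f ` Pp)"
  have mule: "\<And>e. e \<in> Pp \<Longrightarrow> mu \<le> f e" unfolding mu_def using Ppf by (intro Min_le) auto
  have mu0: "0 < mu"
  proof -
    have "mu \<in> f ` Pp" unfolding mu_def using Ppf eRP by (intro Min_in) auto
    then show ?thesis unfolding Pp_def by auto
  qed
  define dd where "dd = mu / K"
  have dd0: "0 < dd" unfolding dd_def using mu0 K0 by simp
  have key: "\<And>e c. e \<in> G_edges n m \<Longrightarrow> \<bar>c\<bar> = dd \<Longrightarrow> 0 \<le> f e + c * Phi e"
  proof -
    fix e c assume e: "e \<in> G_edges n m" and c: "\<bar>c\<bar> = dd"
    show "0 \<le> f e + c * Phi e"
    proof (cases "f e = 0")
      case True
      then show ?thesis using S[OF e] by simp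
    next
      case False
      then have fp: "0 < f e" using F(2) e by (metis order_le_less)
      then have "e \<in> Pp" unfolding Pp_def using e by simp
      then have mf: "mu \<le> f e" by (rule mule)
      have "\<bar>c * Phi e\<bar> = dd * \<bar>Phi e\<bar>" using c by (simp add: abs_mult)
      also have "\<dots> \<le> dd * K" using Kb[OF e] dd0 by (intro mult_left_mono) auto
      also have "\<dots> = mu" unfolding dd_def using K0 by simp
      finally have "\<bar>c * Phi e\<bar> \<le> f e" using mf by linarith
      then show ?thesis by linarith
    qed
  qed
  define g where "g = (\<lambda>e. f e + dd * Phi e)"
  define h where "h = (\<lambda>e. f e + (- dd) * Phi e)"
  have inP: "\<And>c. \<bar>c\<bar> = dd \<Longrightarrow> (\<lambda>e. f e + c * Phi e) \<in> flow_polytope n m a"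
  proof -
    fix c :: real assume c: "\<bar>c\<bar> = dd"
    have z: "zoff n m (\<lambda>e. f e + c * Phi e)" using F(1) Z unfolding zoff_def by simp
    have nn: "\<forall>e\<in>G_edges n m. 0 \<le> f e + c * Phi e" using key c by blast
    have "nodeeq n m (\<lambda>i j. sa a i j + c * 0) (\<lambda>e. f e + c * Phi e)"
      by (rule nodeeq_lin[OF F(3) N])
    then have ne: "nodeeq n m (sa a) (\<lambda>e. f e + c * Phi e)" by simp
    show "(\<lambda>e. f e + c * Phi e) \<in> flow_polytope n m a"
      using z nn ne poly_iff[OF n] by blast
  qed
  have gP: "g \<in> flow_polytope n m a" unfolding g_def by (rule inP) (use dd0 in simp)
  have hP: "h \<in> flow_polytope n m a" unfolding h_def by (rule inP) (use dd0 in simp)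
  have comb: "f = (\<lambda>e. (1 - 1/2) * g e + 1/2 * h e)"
    unfolding g_def h_def by (intro ext) (simp add: algebra_simps)
  have vv: "\<forall>g\<in>flow_polytope n m a. \<forall>h\<in>flow_polytope n m a. \<forall>t::real. 0 < t \<and> t < 1 \<and>
      f = (\<lambda>e. (1 - t) * g e + t * h e) \<longrightarrow> g = h"
    using v unfolding is_vertex_def by blast
  then have "0 < (1/2::real) \<and> (1/2::real) < 1 \<and> f = (\<lambda>e. (1 - 1/2) * g e + 1/2 * h e) \<longrightarrow> g = h"
    using gP hP by blast
  then have "g = h" using comb by simp
  then have "g eRe = h eRe" by simp
  then have "dd = - dd" unfolding g_def h_def using One by simp
  then show False using dd0 by simp
qed

lemma vertex_iff:
  assumes n: "1 \<le> n"
  shows "is_vertex (flow_polytope n m a) f \<longleftrightarrow> f \<in> flow_polytope n m a \<and> single n m f"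
  using vertex_single[OF n] single_vertex[OF n] unfolding is_vertex_def by blast


fun chainOK :: "nat \<Rightarrow> nat \<Rightarrow> nat list \<Rightarrow> bool" where
  "chainOK n r [] = True"
| "chainOK n r (c # ws) = (c < 2 ^ n \<and> A_mat n $$ (r, c) = 1 \<and> chainOK n c ws)"

definition chains :: "nat \<Rightarrow> nat \<Rightarrow> nat \<Rightarrow> nat list set" where
  "chains n m r = {ws. length ws = m \<and> chainOK n r ws}"

lemma chainOK_nth:
  "chainOK n r ws \<longleftrightarrow> (\<forall>k < length ws. ws ! k < 2 ^ n \<and>
      A_mat n $$ (if k = 0 then r else ws ! (k - 1), ws ! k) = 1)"
proof (induction ws arbitrary: r)
  case Nil then show ?case by simp
next
  case (Cons c ws)
  show ?case
  proof
    assume h: "chainOK n r (c # ws)"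
    show "\<forall>k<length (c # ws). (c # ws) ! k < 2 ^ n \<and>
      A_mat n $$ (if k = 0 then r else (c # ws) ! (k - 1), (c # ws) ! k) = 1"
    proof (intro allI impI)
      fix k assume k: "k < length (c # ws)"
      show "(c # ws) ! k < 2 ^ n \<and> A_mat n $$ (if k = 0 then r else (c # ws) ! (k - 1), (c # ws) ! k) = 1"
      proof (cases k)
        case 0 then show ?thesis using h by simp
      next
        case (Suc k')
        have "ws ! k' < 2 ^ n \<and> A_mat n $$ (if k' = 0 then c else ws ! (k' - 1), ws ! k') = 1"
          using h Cons.IH[of c] k Suc by simp
        then show ?thesis using Suc by (cases k') auto
      qed
    qed
  next
    assume h: "\<forall>k<length (c # ws). (c # ws) ! k < 2 ^ n \<and>
      A_mat n $$ (if k = 0 then r else (c # ws) ! (k - 1), (c # ws) ! k) = 1"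
    have a: "c < 2 ^ n \<and> A_mat n $$ (r, c) = 1" using h[rule_format, of 0] by simp
    have "\<forall>k<length ws. ws ! k < 2 ^ n \<and> A_mat n $$ (if k = 0 then c else ws ! (k - 1), ws ! k) = 1"
    proof (intro allI impI)
      fix k assume k: "k < length ws"
      have "(c # ws) ! Suc k < 2 ^ n \<and> A_mat n $$ ((c # ws) ! k, (c # ws) ! Suc k) = 1"
        using h[rule_format, of "Suc k"] k by simp
      then show "ws ! k < 2 ^ n \<and> A_mat n $$ (if k = 0 then c else ws ! (k - 1), ws ! k) = 1"
        by (cases k) auto
    qed
    then show "chainOK n r (c # ws)" using a Cons.IH[of c] by simp
  qed
qed

lemma zo_chi: "zo n (chi a)"
  unfolding zo_def chi_def by auto

lemma A_one_iff:
  assumes "r < 2 ^ n" "c < 2 ^ n"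
  shows "A_mat n $$ (r, c) = 1 \<longleftrightarrow> realz n (bitvec r) (bitvec c)"
  using A_entry[OF assms] by simp

definition colW :: "(gvert \<times> gvert \<Rightarrow> real) \<Rightarrow> nat \<Rightarrow> nat \<Rightarrow> nat" where
  "colW f k i = (if 0 < Rf f i k then 1 else 0)"

definition colU :: "(nat \<Rightarrow> nat) \<Rightarrow> (gvert \<times> gvert \<Rightarrow> real) \<Rightarrow> nat \<Rightarrow> nat \<Rightarrow> nat" where
  "colU a f k i = (if k = 0 then chi a i else colW f (k - 1) i)"

definition pat :: "nat \<Rightarrow> nat \<Rightarrow> (gvert \<times> gvert \<Rightarrow> real) \<Rightarrow> nat list" where
  "pat n m f = map (\<lambda>k. ind n (colW f k)) [0..<m]"

lemma zo_colW: "zo n (colW f k)"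
  unfolding zo_def colW_def by auto

lemma act_tot:
  assumes n: "1 \<le> n" and f: "f \<in> flow_polytope n m a" and s: "single n m f" and k: "k \<le> m"
  shows "1 \<le> i \<Longrightarrow> i \<le> n \<Longrightarrow> act (colU a f k) (colW f k) i \<longleftrightarrow> 0 < Rf f i k + Df n f i k"
proof (induction i)
  case 0 then show ?case by simp
next
  case (Suc i)
  have F: "zoff n m f" "\<forall>e\<in>G_edges n m. 0 \<le> f e" "nodeeq n m (sa a) f" using f poly_iff[OF n] by auto
  have Rnn: "\<And>i j. 1 \<le> i \<Longrightarrow> i \<le> n \<Longrightarrow> 0 \<le> Rf f i j" using Rf_nonneg[OF F(2,1)] by blast
  have Dnn: "\<And>i j. 1 \<le> i \<Longrightarrow> i \<le> n \<Longrightarrow> j \<le> m \<Longrightarrow> 0 \<le> Df n f i j" using Df_nonneg[OF F(2)] by blast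
  have eq: "Rf f (Suc i) k + Df n f (Suc i) k = sa a (Suc i) k + inflow n f (Suc i) k"
    using F(3) Suc.prems k unfolding nodeeq_def by blast
  have sa0: "0 \<le> sa a (Suc i) k" unfolding sa_def by simp
  have saP: "0 < sa a (Suc i) k \<longleftrightarrow> k = 0 \<and> chi a (Suc i) \<noteq> 0" unfolding sa_def chi_def by auto
  have r0: "0 \<le> (if 0 < k then Rf f (Suc i) (k - 1) else 0)" using Rnn Suc.prems by auto
  have d0: "0 \<le> (if 1 < Suc i then Df n f i k else 0)" using Dnn Suc.prems k by auto
  have infP: "0 < inflow n f (Suc i) k \<longleftrightarrow>
      (0 < k \<and> 0 < Rf f (Suc i) (k - 1)) \<or> (1 < Suc i \<and> 0 < Df n f i k)"
    unfolding inflow_def using r0 d0 by auto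
  have totP: "0 < Rf f (Suc i) k + Df n f (Suc i) k \<longleftrightarrow>
      (k = 0 \<and> chi a (Suc i) \<noteq> 0) \<or> (0 < k \<and> 0 < Rf f (Suc i) (k - 1)) \<or> (1 < Suc i \<and> 0 < Df n f i k)"
  proof -
    have "inflow n f (Suc i) k = (if 0 < k then Rf f (Suc i) (k - 1) else 0) + (if 1 < Suc i then Df n f i k else 0)"
      unfolding inflow_def by simp
    then have "0 \<le> inflow n f (Suc i) k" using r0 d0 by linarith
    then show ?thesis using eq sa0 saP infP by linarith
  qed
  have DP: "1 \<le> i \<Longrightarrow> 0 < Df n f i k \<longleftrightarrow> (0 < Rf f i k + Df n f i k) \<and> \<not> 0 < Rf f i k"
  proof -
    assume i1: "1 \<le> i"
    have "Rf f i k = 0 \<or> Df n f i k = 0" using s i1 Suc.prems k unfolding single_def by auto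
    moreover have "0 \<le> Rf f i k" "0 \<le> Df n f i k" using Rnn Dnn i1 Suc.prems k by auto
    ultimately show ?thesis by auto
  qed
  show ?case
  proof (cases "i = 0")
    case True
    then show ?thesis unfolding totP colU_def colW_def by auto
  next
    case False
    then have i1: "1 \<le> i" by simp
    have IH: "act (colU a f k) (colW f k) i \<longleftrightarrow> 0 < Rf f i k + Df n f i k"
      using Suc.IH i1 Suc.prems by simp
    have a1: "act (colU a f k) (colW f k) (Suc i) \<longleftrightarrow>
        colU a f k (Suc i) \<noteq> 0 \<or> (act (colU a f k) (colW f k) i \<and> colW f k i = 0)" by simp
    have a2: "colU a f k (Suc i) \<noteq> 0 \<longleftrightarrow> (k = 0 \<and> chi a (Suc i) \<noteq> 0) \<or> (0 < k \<and> 0 < Rf f (Suc i) (k - 1))"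
      unfolding colU_def colW_def by auto
    have a3: "colW f k i = 0 \<longleftrightarrow> \<not> 0 < Rf f i k" unfolding colW_def by auto
    show ?thesis unfolding a1 a2 a3 IH totP DP[OF i1] using i1 by auto
  qed
qed

lemma realz_col:
  assumes n: "1 \<le> n" and f: "f \<in> flow_polytope n m a" and s: "single n m f" and k: "k \<le> m"
  shows "realz n (colU a f k) (colW f k)"
  unfolding realz_def
proof (intro ballI impI)
  fix i assume i: "i \<in> {1..n}" and w: "colW f k i \<noteq> 0"
  have F: "zoff n m f" "\<forall>e\<in>G_edges n m. 0 \<le> f e" using f poly_iff[OF n] by auto
  have "0 < Rf f i k" using w unfolding colW_def by (auto split: if_splits)
  moreover have "0 \<le> Df n f i k" using Df_nonneg[OF F(2)] i k by auto
  ultimately have "0 < Rf f i k + Df n f i k" by simp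
  then show "act (colU a f k) (colW f k) i" using act_tot[OF n f s k] i by auto
qed

lemma bitvec_ind_colW: "i \<in> {1..n} \<Longrightarrow> bitvec (ind n (colW f k)) i = colW f k i"
  by (rule bitvec_ind[OF zo_colW])

lemma pat_chain:
  assumes n: "1 \<le> n" and v: "is_vertex (flow_polytope n m a) f"
  shows "pat n m f \<in> chains n m (ind n (chi a))"
proof -
  have f: "f \<in> flow_polytope n m a" and s: "single n m f" using vertex_iff[OF n] v by auto
  have "chainOK n (ind n (chi a)) (pat n m f)"
    unfolding chainOK_nth
  proof (intro allI impI)
    fix k assume k: "k < length (pat n m f)"
    then have km: "k < m" unfolding pat_def by simp
    have pk: "pat n m f ! k = ind n (colW f k)" using km unfolding pat_def by simp
    have lt: "pat n m f ! k < 2 ^ n" unfolding pk by (rule ind_lt[OF zo_colW])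
    let ?p = "if k = 0 then ind n (chi a) else pat n m f ! (k - 1)"
    have plt: "?p < 2 ^ n" using ind_lt[OF zo_chi] ind_lt[OF zo_colW] km unfolding pat_def by auto
    have bp: "\<And>i. i \<in> {1..n} \<Longrightarrow> bitvec ?p i = colU a f k i"
      unfolding colU_def using km bitvec_ind[OF zo_chi] bitvec_ind_colW unfolding pat_def by auto
    have bw: "\<And>i. i \<in> {1..n} \<Longrightarrow> bitvec (pat n m f ! k) i = colW f k i"
      unfolding pk by (rule bitvec_ind_colW)
    have "realz n (bitvec ?p) (bitvec (pat n m f ! k))"
      using realz_col[OF n f s, of k] km realz_cong[of n "bitvec ?p" "colU a f k" "bitvec (pat n m f ! k)" "colW f k"]
        bp bw by auto
    then show "pat n m f ! k < 2 ^ n \<and> A_mat n $$ (?p, pat n m f ! k) = 1"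
      using lt A_one_iff[OF plt lt] by simp
  qed
  moreover have "length (pat n m f) = m" unfolding pat_def by simp
  ultimately show ?thesis unfolding chains_def by simp
qed

lemma pat_inj:
  assumes n: "1 \<le> n"
  shows "inj_on (pat n m) {f. is_vertex (flow_polytope n m a) f}"
proof (rule inj_onI)
  fix f g assume fv: "f \<in> {f. is_vertex (flow_polytope n m a) f}" and gv: "g \<in> {f. is_vertex (flow_polytope n m a) f}"
    and eq: "pat n m f = pat n m g"
  have f: "f \<in> flow_polytope n m a" "single n m f" using vertex_iff[OF n] fv by auto
  have g: "g \<in> flow_polytope n m a" "single n m g" using vertex_iff[OF n] gv by auto
  have Ff: "zoff n m f" "\<forall>e\<in>G_edges n m. 0 \<le> f e" using f(1) poly_iff[OF n] by auto
  have Fg: "zoff n m g" "\<forall>e\<in>G_edges n m. 0 \<le> g e" using g(1) poly_iff[OF n] by auto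
  have same: "\<And>i k. 1 \<le> i \<Longrightarrow> i \<le> n \<Longrightarrow> k < m \<Longrightarrow> 0 < Rf f i k \<longleftrightarrow> 0 < Rf g i k"
  proof -
    fix i k assume i: "1 \<le> i" "i \<le> n" and k: "k < m"
    have "ind n (colW f k) = ind n (colW g k)"
      using eq k unfolding pat_def by (metis (no_types, lifting) add_0 diff_zero length_map length_upt nth_map nth_upt)
    then have "colW f k i = colW g k i"
      using bitvec_ind_colW[of i n f k] bitvec_ind_colW[of i n g k] i by simp
    then show "0 < Rf f i k \<longleftrightarrow> 0 < Rf g i k" unfolding colW_def by (auto split: if_splits)
  qed
  show "f = g"
  proof (rule uniq[OF n f(1) g(1)])
    fix i j assume ij: "1 \<le> i" "i \<le> n" "j \<le> m"
    show "(Rf f i j = 0 \<and> Rf g i j = 0) \<or> (Df n f i j = 0 \<and> Df n g i j = 0)"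
    proof (cases "j < m")
      case False
      then show ?thesis using Rf_m[OF Ff(1)] Rf_m[OF Fg(1)] by simp
    next
      case True
      have rf: "0 \<le> Rf f i j" "0 \<le> Rf g i j" using Rf_nonneg[OF Ff(2,1)] Rf_nonneg[OF Fg(2,1)] ij by auto
      have sf: "Rf f i j = 0 \<or> Df n f i j = 0" "Rf g i j = 0 \<or> Df n g i j = 0"
        using f(2) g(2) ij unfolding single_def by auto
      show ?thesis using same[OF ij(1,2) True] rf sf by auto
    qed
  qed
qed


lemma chain_realz:
  assumes ws: "ws \<in> chains n m (ind n (chi a))" and k: "k < m"
  shows "realz n (\<lambda>i. if k = 0 then chi a i else bitvec (ws ! (k - 1)) i) (bitvec (ws ! k))"
proof -
  have len: "length ws = m" and co: "chainOK n (ind n (chi a)) ws" using ws unfolding chains_def by auto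
  let ?p = "if k = 0 then ind n (chi a) else ws ! (k - 1)"
  have A: "ws ! k < 2 ^ n \<and> A_mat n $$ (?p, ws ! k) = 1" using co k len unfolding chainOK_nth by auto
  have plt: "?p < 2 ^ n"
  proof (cases "k = 0")
    case True then show ?thesis using ind_lt[OF zo_chi] by simp
  next
    case False then show ?thesis using co k len unfolding chainOK_nth by auto
  qed
  have "A_mat n $$ (?p, ws ! k) = 1 \<longleftrightarrow> realz n (bitvec ?p) (bitvec (ws ! k))"
    by (rule A_one_iff[OF plt A[THEN conjunct1]])
  then have r: "realz n (bitvec ?p) (bitvec (ws ! k))" using A by blast
  have "\<And>i. 1 \<le> i \<Longrightarrow> i \<le> n \<Longrightarrow> bitvec ?p i = (if k = 0 then chi a i else bitvec (ws ! (k - 1)) i)"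
    using bitvec_ind[OF zo_chi] by auto
  then show ?thesis using realz_cong[of n "bitvec ?p" "\<lambda>i. if k = 0 then chi a i else bitvec (ws ! (k - 1)) i"] r by auto
qed

lemma rtot_act:
  assumes n: "1 \<le> n" and ws: "ws \<in> chains n m (ind n (chi a))"
  defines "ch \<equiv> (\<lambda>i k. k < m \<and> bitvec (ws ! k) i \<noteq> 0)"
  defines "U' \<equiv> (\<lambda>k i. if k = 0 then chi a i else bitvec (ws ! (k - 1)) i)"
  shows "k < m \<Longrightarrow> 1 \<le> i \<Longrightarrow> i \<le> n \<Longrightarrow> (0 < rtot ch (sa a) i k \<longleftrightarrow> act (U' k) (bitvec (ws ! k)) i)"
proof (induction k arbitrary: i rule: less_induct)
  case (less k)
  have len: "length ws = m" and co: "chainOK n (ind n (chi a)) ws" using ws unfolding chains_def by auto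
  have sa0: "\<And>i j. 0 \<le> sa a i j" unfolding sa_def by auto
  have rnn: "\<And>i j. 0 \<le> rtot ch (sa a) i j" by (rule rtot_nonneg[OF sa0])
  have rz: "\<And>k. k < m \<Longrightarrow> realz n (U' k) (bitvec (ws ! k))"
    unfolding U'_def by (rule chain_realz[OF ws])
  have prev: "0 < k \<Longrightarrow> ch i (k - 1) \<Longrightarrow> 1 \<le> i \<Longrightarrow> i \<le> n \<Longrightarrow> 0 < rtot ch (sa a) i (k - 1)" for i
  proof -
    assume k0: "0 < k" and c: "ch i (k - 1)" and i: "1 \<le> i" "i \<le> n"
    have km: "k - 1 < m" using less.prems by simp
    have "act (U' (k - 1)) (bitvec (ws ! (k - 1))) i"
      using rz[OF km] c i unfolding realz_def ch_def by auto
    then show ?thesis using less.IH[of "k - 1" i] k0 km i by simp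
  qed
  show ?case using less.prems(2,3)
  proof (induction i)
    case 0 then show ?case by simp
  next
    case (Suc i)
    have eq: "rtot ch (sa a) (Suc i) k = sa a (Suc i) k + (if 0 < k \<and> ch (Suc i) (k - 1) then rtot ch (sa a) (Suc i) (k - 1) else 0)
      + (if 1 < Suc i \<and> \<not> ch (Suc i - 1) k then rtot ch (sa a) (Suc i - 1) k else 0)"
      by (rule rtot.simps)
    have t2: "(0 < (if 0 < k \<and> ch (Suc i) (k - 1) then rtot ch (sa a) (Suc i) (k - 1) else 0)) \<longleftrightarrow> (0 < k \<and> ch (Suc i) (k - 1))"
      using prev[of "Suc i"] Suc.prems by auto
    have t1: "0 < sa a (Suc i) k \<longleftrightarrow> k = 0 \<and> chi a (Suc i) \<noteq> 0" unfolding sa_def chi_def by auto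
    have pos: "0 < rtot ch (sa a) (Suc i) k \<longleftrightarrow> (k = 0 \<and> chi a (Suc i) \<noteq> 0) \<or> (0 < k \<and> ch (Suc i) (k - 1))
        \<or> (1 < Suc i \<and> \<not> ch i k \<and> 0 < rtot ch (sa a) i k)"
    proof -
      have "0 \<le> sa a (Suc i) k" by (rule sa0)
      moreover have "0 \<le> (if 0 < k \<and> ch (Suc i) (k - 1) then rtot ch (sa a) (Suc i) (k - 1) else 0)" using rnn by simp
      moreover have "0 \<le> (if 1 < Suc i \<and> \<not> ch i k then rtot ch (sa a) i k else 0)" using rnn by simp
      ultimately show ?thesis unfolding eq using t1 t2 by (auto simp: add_pos_nonneg add_nonneg_pos)
    qed
    have a2: "U' k (Suc i) \<noteq> 0 \<longleftrightarrow> (k = 0 \<and> chi a (Suc i) \<noteq> 0) \<or> (0 < k \<and> ch (Suc i) (k - 1))"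
      unfolding U'_def ch_def using less.prems(1) by auto
    have a3: "bitvec (ws ! k) i = 0 \<longleftrightarrow> \<not> ch i k" unfolding ch_def using less.prems(1) by auto
    show ?case
    proof (cases "i = 0")
      case True
      then show ?thesis unfolding pos act.simps a2 by simp
    next
      case False
      then have IH: "0 < rtot ch (sa a) i k \<longleftrightarrow> act (U' k) (bitvec (ws ! k)) i" using Suc.IH Suc.prems by simp
      show ?thesis unfolding pos act.simps a2 a3 IH using False by auto
    qed
  qed
qed

lemma pat_surj:
  assumes n: "1 \<le> n" and ws: "ws \<in> chains n m (ind n (chi a))"
  shows "\<exists>f. is_vertex (flow_polytope n m a) f \<and> pat n m f = ws"
proof -
  define ch where "ch = (\<lambda>i k. k < m \<and> bitvec (ws ! k) i \<noteq> 0)"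
  define U' where "U' = (\<lambda>k i. if k = 0 then chi a i else bitvec (ws ! (k - 1)) i)"
  define F where "F = rflow n m ch (sa a)"
  have len: "length ws = m" and co: "chainOK n (ind n (chi a)) ws" using ws unfolding chains_def by auto
  have sa0: "\<And>i j. 0 \<le> sa a i j" unfolding sa_def by auto
  have chm: "\<And>i j. ch i j \<Longrightarrow> j < m" unfolding ch_def by auto
  have FP: "F \<in> flow_polytope n m a"
  proof -
    have NE: "nodeeq n m (sa a) (rflow n m ch (sa a))" by (rule nodeeq_rflow) (simp add: ch_def)
    have NN: "\<forall>e\<in>G_edges n m. 0 \<le> rflow n m ch (sa a) e" using nonneg_rflow[where s="sa a", OF sa0] by blast
    show ?thesis unfolding poly_iff[OF n] F_def using zoff_rflow[of n m ch "sa a"] NN NE by blast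
  qed
  have Fv: "is_vertex (flow_polytope n m a) F"
    using vertex_iff[OF n] FP single_rflow unfolding F_def by blast
  have rz: "\<And>k. k < m \<Longrightarrow> realz n (U' k) (bitvec (ws ! k))"
    unfolding U'_def by (rule chain_realz[OF ws])
  have col: "\<And>k. k < m \<Longrightarrow> ind n (colW F k) = ws ! k"
  proof -
    fix k assume k: "k < m"
    have "ind n (colW F k) = ind n (bitvec (ws ! k))"
    proof (rule ind_cong)
      fix i assume i: "i \<in> {1..n}"
      have "ch i k \<Longrightarrow> 0 < rtot ch (sa a) i k"
      proof -
        assume c: "ch i k"
        have "act (U' k) (bitvec (ws ! k)) i" using rz[OF k] c i unfolding realz_def ch_def by auto
        then show ?thesis using rtot_act[OF n ws, of k i] k i unfolding ch_def U'_def by auto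
      qed
      then have "0 < Rf F i k \<longleftrightarrow> ch i k" using Rf_rflow[of i n m ch "sa a" k] i k unfolding F_def by auto
      then show "colW F k i = bitvec (ws ! k) i" unfolding colW_def ch_def bitvec_def using k by auto
    qed
    also have "\<dots> = ws ! k"
    proof (rule ind_bitvec)
      show "ws ! k < 2 ^ n" using co k len unfolding chainOK_nth by auto
    qed
    finally show "ind n (colW F k) = ws ! k" .
  qed
  have "pat n m F = ws"
    by (rule nth_equalityI) (use len col in \<open>auto simp: pat_def\<close>)
  then show ?thesis using Fv by blast
qed

lemma card_vertices:
  assumes n: "1 \<le> n"
  shows "card {f. is_vertex (flow_polytope n m a) f} = card (chains n m (ind n (chi a)))"
proof (rule bij_betw_same_card)
  show "bij_betw (pat n m) {f. is_vertex (flow_polytope n m a) f} (chains n m (ind n (chi a)))"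
    unfolding bij_betw_def
  proof
    show "inj_on (pat n m) {f. is_vertex (flow_polytope n m a) f}" by (rule pat_inj[OF n])
    show "pat n m ` {f. is_vertex (flow_polytope n m a) f} = chains n m (ind n (chi a))"
    proof
      show "pat n m ` {f. is_vertex (flow_polytope n m a) f} \<subseteq> chains n m (ind n (chi a))"
        using pat_chain[OF n] by blast
      show "chains n m (ind n (chi a)) \<subseteq> pat n m ` {f. is_vertex (flow_polytope n m a) f}"
        using pat_surj[OF n] by blast
    qed
  qed
qed

lemma chains_0: "chains n 0 r = {[]}"
  unfolding chains_def by auto

lemma num_vertices_chains:
  assumes n: "1 \<le> n"
  shows "num_vertices n m a = card (chains n m (ind n (chi a)))"
  using card_vertices[OF n] unfolding num_vertices_def by (simp add: chains_0)

lemma finite_chains: "finite (chains n m r)"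
proof -
  have "chains n m r \<subseteq> {ws. set ws \<subseteq> {..<2 ^ n} \<and> length ws = m}"
    unfolding chains_def chainOK_nth by (auto simp: in_set_conv_nth)
  moreover have "finite {ws. set ws \<subseteq> {..<(2::nat) ^ n} \<and> length ws = m}"
    by (rule finite_lists_length_eq) simp
  ultimately show ?thesis by (rule finite_subset)
qed

lemma chains_Suc:
  "chains n (Suc m) r = (\<Union>c\<in>{c. c < 2 ^ n \<and> A_mat n $$ (r, c) = 1}. Cons c ` chains n m c)"
  unfolding chains_def by (auto simp: length_Suc_conv)

lemma card_chains_Suc:
  "card (chains n (Suc m) r) = (\<Sum>c<2 ^ n. if A_mat n $$ (r, c) = 1 then card (chains n m c) else 0)"
proof -
  have "card (chains n (Suc m) r) = (\<Sum>c\<in>{c. c < 2 ^ n \<and> A_mat n $$ (r, c) = 1}. card (Cons c ` chains n m c))"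
    unfolding chains_Suc
    by (rule card_UN_disjoint) (auto simp: finite_chains)
  also have "\<dots> = (\<Sum>c\<in>{c. c < 2 ^ n \<and> A_mat n $$ (r, c) = 1}. card (chains n m c))"
    by (intro sum.cong refl card_image) (simp add: inj_on_def)
  also have "\<dots> = (\<Sum>c<2 ^ n. if A_mat n $$ (r, c) = 1 then card (chains n m c) else 0)"
  proof -
    have e: "{c. c < 2 ^ n \<and> A_mat n $$ (r, c) = 1} = {c \<in> {..<2 ^ n}. A_mat n $$ (r, c) = 1}" by auto
    show ?thesis unfolding e by (rule sum.inter_filter) simp
  qed
  finally show ?thesis .
qed


lemma A_dims: "dim_row (A_mat n) = 2 ^ n" "dim_col (A_mat n) = 2 ^ n"
  unfolding A_mat_def by simp_all

lemma IxA_carrier: "IxA n \<in> carrier_mat (2 ^ n) (2 ^ n)"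
  unfolding IxA_def carrier_mat_def by (simp add: A_dims)

lemma IxA_entry:
  assumes "i < 2 ^ n" "j < 2 ^ n"
  shows "IxA n $$ (i, j) = (if i = j then 1 else 0) - [:0, 1:] * [:real_of_int (A_mat n $$ (i, j)):]"
  unfolding IxA_def using assms by (simp add: A_dims)

definition phi :: "nat \<Rightarrow> nat \<Rightarrow> nat" where
  "phi n r = (\<Sum>l=1..n. \<Sum>k=1..l. bitvec r k)"

lemma partial_eq_pointwise:
  fixes u v :: "nat \<Rightarrow> nat"
  assumes "\<forall>l\<in>{1..n}. (\<Sum>k=1..l. u k) = (\<Sum>k=1..l. (v k :: nat))"
  shows "\<forall>k\<in>{1..n}. u k = v k"
proof
  fix k assume k: "k \<in> {1..n}"
  then obtain k' where k': "k = Suc k'" by (cases k) auto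
  have s: "(\<Sum>x=1..Suc k'. u x) = (\<Sum>x=1..k'. u x) + u (Suc k')"
       "(\<Sum>x=1..Suc k'. v x) = (\<Sum>x=1..k'. v x) + v (Suc k')" by (simp_all add: sum.cl_ivl_Suc)
  have e1': "(\<Sum>x=1..k. u x) = (\<Sum>x=1..k. v x)" using assms k by blast
  have e1: "(\<Sum>x=1..Suc k'. u x) = (\<Sum>x=1..Suc k'. v x)" using e1' k' by simp
  have e0: "(\<Sum>x=1..k'. u x) = (\<Sum>x=1..k'. v x)"
  proof (cases "k' = 0")
    case True then show ?thesis by simp
  next
    case False
    then have "k' \<in> {1..n}" using k k' by auto
    then show ?thesis using assms by blast
  qed
  show "u k = v k" using s e1 e0 k' by simp
qed

lemma dom_phi_le:
  assumes "dominates n (bitvec r) (bitvec c)"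
  shows "phi n c \<le> phi n r"
  unfolding phi_def
proof (rule sum_mono)
  fix l assume "l \<in> {1..n}"
  then show "(\<Sum>k=1..l. bitvec c k) \<le> (\<Sum>k=1..l. bitvec r k)" using assms unfolding dominates_def by blast
qed

lemma dom_phi_eq:
  assumes r: "r < 2 ^ n" and c: "c < 2 ^ n" and d: "dominates n (bitvec r) (bitvec c)"
    and e: "phi n c = phi n r"
  shows "r = c"
proof -
  have le: "\<And>l. l \<in> {1..n} \<Longrightarrow> (\<Sum>k=1..l. bitvec c k) \<le> (\<Sum>k=1..l. bitvec r k)"
    using d unfolding dominates_def by auto
  have "\<forall>l\<in>{1..n}. (\<Sum>k=1..l. bitvec c k) = (\<Sum>k=1..l. bitvec r k)"
  proof
    fix l assume l: "l \<in> {1..n}"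
    show "(\<Sum>k=1..l. bitvec c k) = (\<Sum>k=1..l. bitvec r k)"
      by (rule sum_mono_inv[of "\<lambda>l. \<Sum>k=1..l. bitvec c k" "{1..n}" "\<lambda>l. \<Sum>k=1..l. bitvec r k"])
         (use e le l in \<open>auto simp: phi_def\<close>)
  qed
  then have "\<forall>k\<in>{1..n}. bitvec c k = bitvec r k" by (rule partial_eq_pointwise)
  then have "ind n (bitvec c) = ind n (bitvec r)" by (intro ind_cong) auto
  then show ?thesis using ind_bitvec[OF r] ind_bitvec[OF c] by simp
qed

lemma perm_tri_id:
  assumes p: "p permutes {0..<2 ^ n}"
    and h: "\<And>i::nat. i < 2 ^ n \<Longrightarrow> p i = i \<or> A_mat n $$ (i, p i) \<noteq> 0"
  shows "p = id"
proof -
  have pl: "\<And>i::nat. i < 2 ^ n \<Longrightarrow> p i < 2 ^ n" using p permutes_in_image by fastforce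
  have le: "\<And>i::nat. i \<in> {0..<2 ^ n} \<Longrightarrow> phi n (p i) \<le> phi n i"
  proof -
    fix i :: nat assume i: "i \<in> {0..<2 ^ n}"
    show "phi n (p i) \<le> phi n i"
    proof (cases "p i = i")
      case True then show ?thesis by simp
    next
      case False
      then have "A_mat n $$ (i, p i) \<noteq> 0" using h i by auto
      then have "dominates n (bitvec i) (bitvec (p i))" using A_dom pl i by auto
      then show ?thesis by (rule dom_phi_le)
    qed
  qed
  have sp: "(\<Sum>i\<in>{0..<2 ^ n}. phi n (p i)) = (\<Sum>i\<in>{0..<2 ^ n}. phi n i)"
    using sum.permute[OF p, of "phi n"] by (simp add: comp_def)
  have "\<And>i::nat. i < 2 ^ n \<Longrightarrow> p i = i"
  proof -
    fix i :: nat assume i: "i < 2 ^ n"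
    have eq: "phi n (p i) = phi n i"
      by (rule sum_mono_inv[OF sp le]) (use i in auto)
    show "p i = i"
    proof (rule ccontr)
      assume ne: "p i \<noteq> i"
      then have "A_mat n $$ (i, p i) \<noteq> 0" using h i by auto
      then have "dominates n (bitvec i) (bitvec (p i))" using A_dom pl i by auto
      then have "i = p i" using dom_phi_eq[OF i pl[OF i]] eq by simp
      then show False using ne by simp
    qed
  qed
  moreover have "\<And>i::nat. \<not> i < 2 ^ n \<Longrightarrow> p i = i" using p unfolding permutes_def by auto
  ultimately show ?thesis by (intro ext) (metis id_apply)
qed

lemma det_IxA: "det (IxA n) = [:1, -1:] ^ (2 ^ n)"
proof -
  let ?N = "2 ^ n :: nat"
  let ?M = "IxA n"
  let ?S = "{p. p permutes {0..<?N}}"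
  let ?t = "\<lambda>p. signof p * (\<Prod>i = 0..<?N. ?M $$ (i, p i))"
  have det: "det ?M = sum ?t ?S" by (rule det_def'[OF IxA_carrier])
  have fin: "finite ?S" by (rule finite_permutations) simp
  have idS: "id \<in> ?S" by (simp add: permutes_id)
  have z: "\<And>p. p \<in> ?S - {id} \<Longrightarrow> ?t p = 0"
  proof -
    fix p assume pS: "p \<in> ?S - {id}"
    then have p: "p permutes {0..<?N}" "p \<noteq> id" by auto
    have pl: "\<And>i. i < ?N \<Longrightarrow> p i < ?N" using p(1) permutes_in_image by fastforce
    obtain i where i: "i < ?N" "p i \<noteq> i" "A_mat n $$ (i, p i) = 0"
      using perm_tri_id[OF p(1)] p(2) by blast
    have "?M $$ (i, p i) = 0" using IxA_entry[OF i(1) pl[OF i(1)]] i by simp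
    then have "(\<Prod>i = 0..<?N. ?M $$ (i, p i)) = 0" using i(1) by (intro prod_zero) auto
    then show "?t p = 0" by simp
  qed
  have "sum ?t ?S = ?t id + sum ?t (?S - {id})" using fin idS by (rule sum.remove)
  also have "sum ?t (?S - {id}) = 0" using z by (intro sum.neutral) auto
  also have "?t id = (\<Prod>i = 0..<?N. ?M $$ (i, i))" by simp
  also have "\<dots> = (\<Prod>i = 0..<?N. [:1, -1:])"
  proof (rule prod.cong[OF refl])
    fix i assume "i \<in> {0..<?N}"
    then have i: "i < ?N" by simp
    have o: "(1::real poly) - [:0, 1:] = [:1, -1:]" by (simp add: one_pCons)
    show "?M $$ (i, i) = [:1, -1:]" using IxA_entry[OF i i] A_diag[OF i] o by simp
  qed
  also have "\<dots> = [:1, -1:] ^ ?N" by simp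
  finally show ?thesis using det by simp
qed


lemma fps_hom: "comm_ring_hom (fps_of_poly :: real poly \<Rightarrow> real fps)"
  by unfold_locales (simp_all add: fps_of_poly_add fps_of_poly_mult)

lemma det_fps: "det (map_mat fps_of_poly (B :: real poly mat)) = fps_of_poly (det B)"
  by (rule comm_ring_hom.hom_det[OF fps_hom])

lemma mat_delete_map: "mat_delete (map_mat f A) i j = map_mat f (mat_delete A i j)"
  unfolding mat_delete_def by (rule eq_matI) auto

definition vT :: "nat \<Rightarrow> nat \<Rightarrow> real fps" where
  "vT n r = Abs_fps (\<lambda>m. real (card (chains n m r)))"

lemma vT_rec:
  assumes r: "r < 2 ^ n"
  shows "vT n r = 1 + fps_X * (\<Sum>(c::nat)<2 ^ n. fps_const (real_of_int (A_mat n $$ (r, c))) * vT n c)"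
proof (rule fps_ext)
  fix k
  show "fps_nth (vT n r) k = fps_nth (1 + fps_X * (\<Sum>(c::nat)<2 ^ n. fps_const (real_of_int (A_mat n $$ (r, c))) * vT n c)) k"
  proof (cases k)
    case 0
    then show ?thesis by (simp add: vT_def chains_0)
  next
    case (Suc k')
    have "real (card (chains n (Suc k') r)) = (\<Sum>(c::nat)<2 ^ n. real (if A_mat n $$ (r, c) = 1 then card (chains n k' c) else 0))"
      unfolding card_chains_Suc by simp
    also have "\<dots> = (\<Sum>(c::nat)<2 ^ n. real_of_int (A_mat n $$ (r, c)) * real (card (chains n k' c)))"
    proof (rule sum.cong[OF refl])
      fix c :: nat assume "c \<in> {..<2 ^ n}"
      then have "A_mat n $$ (r, c) = 0 \<or> A_mat n $$ (r, c) = 1" using A_01 r by auto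
      then show "real (if A_mat n $$ (r, c) = 1 then card (chains n k' c) else 0) =
          real_of_int (A_mat n $$ (r, c)) * real (card (chains n k' c))" by auto
    qed
    finally show ?thesis using Suc by (simp add: vT_def fps_sum_nth)
  qed
qed

lemma fps_lin_one: "fps_of_poly [:1, -1:] = (1 - fps_X :: real fps)"
  by (simp add: fps_of_poly_linear')

lemma fps_identity:
  assumes c: "c < 2 ^ n"
  shows "(1 - fps_X) ^ (2 ^ n) * vT n c =
    fps_of_poly (\<Sum>(j::nat)<2 ^ n. (-1) ^ (c + j) * det (mat_delete (IxA n) j c))"
proof -
  let ?N = "2 ^ n :: nat"
  define Mf where "Mf = map_mat fps_of_poly (IxA n)"
  define v where "v = vec ?N (vT n)"
  define one where "one = vec ?N (\<lambda>_. 1 :: real fps)"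
  have Mc: "Mf \<in> carrier_mat ?N ?N" unfolding Mf_def using IxA_carrier by simp
  have vc: "v \<in> carrier_vec ?N" unfolding v_def by simp
  have Me: "\<And>i j. i < ?N \<Longrightarrow> j < ?N \<Longrightarrow> Mf $$ (i, j) =
      (if i = j then 1 else 0) - fps_X * fps_const (real_of_int (A_mat n $$ (i, j)))"
  proof -
    fix i j assume ij: "i < ?N" "j < ?N"
    have dims: "dim_row (IxA n) = ?N" "dim_col (IxA n) = ?N" using IxA_carrier[of n] by auto
    have "Mf $$ (i, j) = fps_of_poly (IxA n $$ (i, j))" unfolding Mf_def using dims ij by simp
    also have "\<dots> = (if i = j then 1 else 0) - fps_X * fps_const (real_of_int (A_mat n $$ (i, j)))"
      unfolding IxA_entry[OF ij] by (simp add: fps_of_poly_diff fps_of_poly_mult fps_of_poly_const)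
    finally show "Mf $$ (i, j) = (if i = j then 1 else 0) - fps_X * fps_const (real_of_int (A_mat n $$ (i, j)))" .
  qed
  have MV: "Mf *\<^sub>v v = one"
  proof (rule eq_vecI)
    show "dim_vec (Mf *\<^sub>v v) = dim_vec one" using Mc unfolding one_def by simp
    fix i assume "i < dim_vec one"
    then have i: "i < ?N" unfolding one_def by simp
    have "(Mf *\<^sub>v v) $ i = (\<Sum>j<?N. Mf $$ (i, j) * vT n j)"
      using Mc i unfolding v_def by (auto simp: scalar_prod_def lessThan_atLeast0 intro!: sum.cong)
    also have "\<dots> = (\<Sum>j<?N. (if i = j then vT n j else 0) - fps_X * (fps_const (real_of_int (A_mat n $$ (i, j))) * vT n j))"
    proof (rule sum.cong[OF refl])
      fix j :: nat assume "j \<in> {..<?N}"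
      then have j: "j < ?N" by simp
      show "Mf $$ (i, j) * vT n j = (if i = j then vT n j else 0) - fps_X * (fps_const (real_of_int (A_mat n $$ (i, j))) * vT n j)"
        unfolding Me[OF i j] by (simp add: algebra_simps)
    qed
    also have "\<dots> = vT n i - fps_X * (\<Sum>j<?N. fps_const (real_of_int (A_mat n $$ (i, j))) * vT n j)"
      using i by (simp add: sum_subtractf sum_distrib_left)
    also have "\<dots> = 1" using vT_rec[OF i] by simp
    finally show "(Mf *\<^sub>v v) $ i = one $ i" using i unfolding one_def by simp
  qed
  have adjM: "adj_mat Mf * Mf = det Mf \<cdot>\<^sub>m 1\<^sub>m ?N" by (rule adj_mat(3)[OF Mc])
  have adjc: "adj_mat Mf \<in> carrier_mat ?N ?N" by (rule adj_mat(1)[OF Mc])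
  have "adj_mat Mf *\<^sub>v one = (det Mf \<cdot>\<^sub>m 1\<^sub>m ?N) *\<^sub>v v"
    unfolding MV[symmetric] adjM[symmetric] by (rule assoc_mult_mat_vec[symmetric, OF adjc Mc vc])
  then have eqc: "(adj_mat Mf *\<^sub>v one) $ c = ((det Mf \<cdot>\<^sub>m 1\<^sub>m ?N) *\<^sub>v v) $ c" by simp
  have L: "(adj_mat Mf *\<^sub>v one) $ c = (\<Sum>j<?N. adj_mat Mf $$ (c, j))"
    using adjc c unfolding one_def by (auto simp: scalar_prod_def lessThan_atLeast0 intro!: sum.cong)
  have R: "((det Mf \<cdot>\<^sub>m 1\<^sub>m ?N) *\<^sub>v v) $ c = det Mf * vT n c"
  proof -
    have "((det Mf \<cdot>\<^sub>m 1\<^sub>m ?N) *\<^sub>v v) $ c = (\<Sum>j<?N. (det Mf * (if c = j then 1 else 0)) * vT n j)"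
      using c unfolding v_def by (auto simp: scalar_prod_def lessThan_atLeast0 intro!: sum.cong)
    also have "\<dots> = (\<Sum>(j::nat)<?N. if c = j then det Mf * vT n j else 0)" by (intro sum.cong) auto
    also have "\<dots> = det Mf * vT n c" using c by (simp add: sum.delta)
    finally show ?thesis .
  qed
  have adje: "\<And>j. j < ?N \<Longrightarrow> adj_mat Mf $$ (c, j) = fps_of_poly ((-1) ^ (c + j) * det (mat_delete (IxA n) j c))"
  proof -
    fix j assume j: "j < ?N"
    have "adj_mat Mf $$ (c, j) = cofactor Mf j c" unfolding adj_mat_def using Mc c j by simp
    also have "\<dots> = (-1) ^ (j + c) * det (mat_delete Mf j c)" unfolding cofactor_def ..
    also have "det (mat_delete Mf j c) = fps_of_poly (det (mat_delete (IxA n) j c))"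
      unfolding Mf_def mat_delete_map det_fps ..
    finally show "adj_mat Mf $$ (c, j) = fps_of_poly ((-1) ^ (c + j) * det (mat_delete (IxA n) j c))"
      by (simp add: fps_of_poly_mult fps_of_poly_power fps_of_poly_uminus add.commute)
  qed
  have dM: "det Mf = (1 - fps_X) ^ ?N"
    unfolding Mf_def det_fps det_IxA fps_of_poly_power fps_lin_one ..
  have "fps_of_poly (\<Sum>j<?N. (-1) ^ (c + j) * det (mat_delete (IxA n) j c)) = (\<Sum>j<?N. adj_mat Mf $$ (c, j))"
    unfolding fps_of_poly_sum using adje by simp
  also have "\<dots> = det Mf * vT n c" using eqc L R by simp
  finally show ?thesis unfolding dM by simp
qed


section \<open>Degree bounds\<close>

lemma deg_entry:
  assumes "i < 2 ^ n" "j < 2 ^ n"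
  shows "degree (IxA n $$ (i, j)) \<le> 1"
proof -
  have "degree ([:0, 1:] * [:real_of_int (A_mat n $$ (i, j)):]) \<le> 1"
    by (rule order.trans[OF degree_mult_le]) simp
  moreover have "degree ((if i = j then 1 else 0) :: real poly) \<le> 1" by simp
  ultimately show ?thesis unfolding IxA_entry[OF assms]
    by (meson degree_diff_le le_trans max.bounded_iff order_refl)
qed

lemma deg_det_delete:
  assumes j: "j < 2 ^ n" and c: "c < 2 ^ n"
  shows "degree (det (mat_delete (IxA n) j c)) \<le> 2 ^ n - 1"
proof -
  let ?N = "2 ^ n - 1 :: nat"
  let ?B = "mat_delete (IxA n) j c"
  have Bc: "?B \<in> carrier_mat ?N ?N" by (rule mat_delete_carrier[OF IxA_carrier])
  have Be: "\<And>i k. i < ?N \<Longrightarrow> k < ?N \<Longrightarrow> degree (?B $$ (i, k)) \<le> 1"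
  proof -
    fix i k assume ik: "i < ?N" "k < ?N"
    have dims: "dim_row (IxA n) = 2 ^ n" "dim_col (IxA n) = 2 ^ n" using IxA_carrier[of n] by auto
    have "?B $$ (i, k) = IxA n $$ (if i < j then i else Suc i, if k < c then k else Suc k)"
      unfolding mat_delete_def using ik dims by simp
    moreover have "(if i < j then i else Suc i) < 2 ^ n" "(if k < c then k else Suc k) < 2 ^ n"
      using ik by auto
    ultimately show "degree (?B $$ (i, k)) \<le> 1" using deg_entry by simp
  qed
  have "det ?B = (\<Sum>p \<in> {p. p permutes {0..<?N}}. signof p * (\<Prod>i = 0..<?N. ?B $$ (i, p i)))"
    by (rule det_def'[OF Bc])
  also have "degree \<dots> \<le> ?N"
  proof (rule degree_sum_le)
    show "finite {p. p permutes {0..<?N}}" by (rule finite_permutations) simp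
    fix p assume p: "p \<in> {p. p permutes {0..<?N}}"
    have pl: "\<And>i. i < ?N \<Longrightarrow> p i < ?N" using p permutes_in_image by fastforce
    have "degree (\<Prod>i = 0..<?N. ?B $$ (i, p i)) \<le> (\<Sum>i = 0..<?N. degree (?B $$ (i, p i)))"
      using degree_prod_sum_le[of "{0..<?N}" "\<lambda>i. ?B $$ (i, p i)"] by (simp add: comp_def)
    also have "\<dots> \<le> (\<Sum>i = 0..<?N. 1)" using Be pl by (intro sum_mono) auto
    also have "\<dots> = ?N" by simp
    finally have d: "degree (\<Prod>i = 0..<?N. ?B $$ (i, p i)) \<le> ?N" .
    have "degree (signof p * (\<Prod>i = 0..<?N. ?B $$ (i, p i)) :: real poly) \<le>
        degree (signof p :: real poly) + degree (\<Prod>i = 0..<?N. ?B $$ (i, p i))"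
      by (rule degree_mult_le)
    also have "degree (signof p :: real poly) = 0" by (simp add: degree_of_int)
    finally show "degree (signof p * (\<Prod>i = 0..<?N. ?B $$ (i, p i))) \<le> ?N" using d by simp
  qed
  finally show ?thesis .
qed

lemma deg_P:
  assumes c: "c < 2 ^ n"
  shows "degree (\<Sum>(j::nat)<2 ^ n. (-1) ^ (c + j) * det (mat_delete (IxA n) j c) :: real poly) \<le> 2 ^ n - 1"
proof (rule degree_sum_le)
  fix j assume "j \<in> {..<(2::nat) ^ n}"
  then have j: "j < 2 ^ n" by simp
  have "degree ((-1) ^ (c + j) * det (mat_delete (IxA n) j c) :: real poly) \<le>
      degree ((-1) ^ (c + j) :: real poly) + degree (det (mat_delete (IxA n) j c))"
    by (rule degree_mult_le)
  also have "degree ((-1) ^ (c + j) :: real poly) = 0"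
  proof -
    have "degree ((-1) ^ (c + j) :: real poly) \<le> degree (-1 :: real poly) * (c + j)" by (rule degree_power_le)
    then show ?thesis by simp
  qed
  finally show "degree ((-1) ^ (c + j) * det (mat_delete (IxA n) j c) :: real poly) \<le> 2 ^ n - 1"
    using deg_det_delete[OF j c] by simp
qed simp

section \<open>Coefficients of rational power series\<close>

definition Bk :: "nat \<Rightarrow> real fps" where
  "Bk k = Abs_fps (\<lambda>m. real ((m + k) choose k))"

lemma mult_1mX_nth: "fps_nth ((f :: real fps) * (1 - fps_X)) m = fps_nth f m - (if m = 0 then 0 else fps_nth f (m - 1))"
proof -
  have e: "f * (1 - fps_X) = f - f * fps_X" by (simp add: algebra_simps)
  show ?thesis unfolding e fps_sub_nth fps_X_mult_right_nth by simp
qed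

lemma Bk_step: "Bk (Suc k) * (1 - fps_X) = Bk k"
proof (rule fps_ext)
  fix m
  show "fps_nth (Bk (Suc k) * (1 - fps_X)) m = fps_nth (Bk k) m"
  proof (cases m)
    case 0 then show ?thesis by (simp add: mult_1mX_nth Bk_def)
  next
    case (Suc m')
    have "(Suc (m' + Suc k) choose Suc k) = (m' + Suc k choose k) + (m' + Suc k choose Suc k)"
      by (rule binomial_Suc_Suc)
    then have "real (Suc m' + Suc k choose Suc k) - real (m' + Suc k choose Suc k) = real (Suc m' + k choose k)"
      by simp
    then show ?thesis using Suc by (simp add: mult_1mX_nth Bk_def)
  qed
qed

lemma Bk0: "Bk 0 * (1 - fps_X) = 1"
proof (rule fps_ext)
  fix m show "fps_nth (Bk 0 * (1 - fps_X)) m = fps_nth 1 m"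
    by (cases m) (simp_all add: mult_1mX_nth Bk_def)
qed

lemma Bk_mul: "Bk k * (1 - fps_X) ^ Suc k = 1"
proof (induction k)
  case 0 then show ?case using Bk0 by simp
next
  case (Suc k)
  have "Bk (Suc k) * (1 - fps_X) ^ Suc (Suc k) = (Bk (Suc k) * (1 - fps_X)) * (1 - fps_X) ^ Suc k"
    by (simp add: algebra_simps)
  also have "\<dots> = 1" unfolding Bk_step using Suc .
  finally show ?case .
qed

fun bp :: "nat \<Rightarrow> real poly" where
  "bp 0 = 1"
| "bp (Suc k) = Polynomial.smult (1 / real (Suc k)) ([:real (Suc k), 1:] * bp k)"

lemma poly_bp: "poly (bp k) (real m) = real ((m + k) choose k)"
proof (induction k)
  case 0 then show ?case by simp
next
  case (Suc k)
  have e: "Suc k * (Suc (m + k) choose Suc k) = Suc (m + k) * (m + k choose k)"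
    by (rule Suc_times_binomial)
  then have "real (Suc k) * real (Suc (m + k) choose Suc k) = real (Suc (m + k)) * real (m + k choose k)"
    by (metis of_nat_mult)
  then have key: "real (Suc (m + k) choose Suc k) = (real (Suc k) + real m) * real (m + k choose k) / real (Suc k)"
    by (simp add: field_simps del: binomial_Suc_Suc)
  have "poly (bp (Suc k)) (real m) = (real (Suc k) + real m) * real (m + k choose k) / real (Suc k)"
    using Suc by (simp add: field_simps del: binomial_Suc_Suc)
  also have "\<dots> = real (Suc (m + k) choose Suc k)" using key by simp
  finally show ?case by simp
qed

lemma degree_bp: "degree (bp k) \<le> k"
proof (induction k)
  case 0 then show ?case by simp
next
  case (Suc k)
  have "degree ([:real (Suc k), 1:] * bp k) \<le> degree [:real (Suc k), 1:] + degree (bp k)"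
    by (rule degree_mult_le)
  then have "degree ([:real (Suc k), 1:] * bp k) \<le> Suc k" using Suc by simp
  then show ?case by (simp add: degree_smult_le order.trans[OF degree_smult_le])
qed

lemma omX_nz: "(1 - fps_X :: real fps) ^ k \<noteq> 0"
proof -
  have "fps_nth ((1 - fps_X :: real fps) ^ k) 0 = 1" by (simp add: fps_nth_power_0)
  then show ?thesis by auto
qed

lemma poly_coeffs:
  "F * (1 - fps_X) ^ Suc k = fps_of_poly P \<Longrightarrow> degree P \<le> k \<Longrightarrow>
     \<exists>q. degree q \<le> k \<and> (\<forall>m. fps_nth F m = poly q (real m))"
proof (induction k arbitrary: F P)
  case 0
  define c where "c = coeff P 0"
  have P: "P = [:c:]"
    unfolding c_def by (rule poly_eqI) (use 0(2) in \<open>auto simp: coeff_eq_0 coeff_pCons split: nat.split\<close>)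
  have "F * (1 - fps_X) ^ Suc 0 = (fps_const c * Bk 0) * (1 - fps_X) ^ Suc 0"
    using 0(1) Bk_mul[of 0] P by (simp add: fps_of_poly_const mult.assoc)
  then have "F = fps_const c * Bk 0" using omX_nz[of "Suc 0"] by simp
  then have "\<forall>m. fps_nth F m = poly [:c:] (real m)" by (simp add: Bk_def)
  then show ?case by (intro exI[of _ "[:c:]"]) simp
next
  case (Suc k)
  define c where "c = poly P 1"
  define S where "S = synthetic_div P 1"
  have PS: "[:-1, 1:] * S + [:c:] = P" unfolding c_def S_def using synthetic_div_correct'[of 1 P] by simp
  have dS: "degree (- S) \<le> k" unfolding S_def using Suc.prems(2) by (simp add: degree_synthetic_div)
  define G where "G = fps_of_poly (- S) * Bk k"
  have G: "G * (1 - fps_X) ^ Suc k = fps_of_poly (- S)"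
    unfolding G_def using Bk_mul[of k] by (simp add: mult.assoc)
  obtain q1 where q1: "degree q1 \<le> k" "\<forall>m. fps_nth G m = poly q1 (real m)"
    using Suc.IH[OF G dS] by blast
  define H where "H = F - G"
  have e1: "fps_of_poly (- S) * (1 - fps_X) = fps_of_poly ([:-1, 1:] * S)"
  proof -
    have "(- S) * [:1, -1:] = [:-1, 1:] * S" by (simp add: algebra_simps one_pCons)
    then have "fps_of_poly ((- S) * [:1, -1:]) = fps_of_poly ([:-1, 1:] * S)" by simp
    then show ?thesis by (simp add: fps_of_poly_mult fps_lin_one)
  qed
  have "H * (1 - fps_X) ^ Suc (Suc k) = F * (1 - fps_X) ^ Suc (Suc k) - (G * (1 - fps_X) ^ Suc k) * (1 - fps_X)"
    unfolding H_def by (simp add: algebra_simps)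
  also have "\<dots> = fps_of_poly P - fps_of_poly ([:-1, 1:] * S)" unfolding Suc.prems(1) G e1 ..
  also have "\<dots> = fps_const c"
    using arg_cong[OF PS, of fps_of_poly] by (simp add: fps_of_poly_add fps_of_poly_const)
  also have "\<dots> = (fps_const c * Bk (Suc k)) * (1 - fps_X) ^ Suc (Suc k)"
    using Bk_mul[of "Suc k"] by (simp add: mult.assoc)
  finally have "H = fps_const c * Bk (Suc k)" using omX_nz[of "Suc (Suc k)"] by simp
  then have Hn: "\<And>m. fps_nth H m = poly (Polynomial.smult c (bp (Suc k))) (real m)"
  proof -
    fix m assume H: "H = fps_const c * Bk (Suc k)"
    have "fps_nth H m = c * real ((m + Suc k) choose Suc k)" unfolding H Bk_def by (simp only: fps_mult_left_const_nth fps_nth_Abs_fps)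
    also have "\<dots> = poly (Polynomial.smult c (bp (Suc k))) (real m)" by (simp only: poly_smult poly_bp)
    finally show "fps_nth H m = poly (Polynomial.smult c (bp (Suc k))) (real m)" .
  qed
  have "\<forall>m. fps_nth F m = poly (q1 + Polynomial.smult c (bp (Suc k))) (real m)"
  proof
    fix m
    have "F = G + H" unfolding H_def by simp
    then show "fps_nth F m = poly (q1 + Polynomial.smult c (bp (Suc k))) (real m)" using q1(2) Hn by simp
  qed
  moreover have "degree (q1 + Polynomial.smult c (bp (Suc k))) \<le> Suc k"
  proof -
    have "degree (Polynomial.smult c (bp (Suc k))) \<le> Suc k" using degree_bp[of "Suc k"] degree_smult_le order.trans by blast
    then show ?thesis using q1(1) degree_add_le by (meson le_SucI)
  qed
  ultimately show ?case by blast
qed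


theorem corollary5p30:
  fixes n :: nat and a :: "nat \<Rightarrow> nat"
  assumes "n \<ge> 1"
  shows "Abs_fps (\<lambda>m. real (num_vertices n m a)) =
           fps_of_poly (\<Sum>j<2 ^ n. (-1) ^ (ind n (chi a) + j) * Q_poly n a j)
             div (1 - fps_X) ^ (2 ^ n)
       \<and> (\<exists>p :: real poly. degree p \<le> 2 ^ n - 1 \<and>
             (\<forall>m. real (num_vertices n m a) = poly p (real m)))"
proof -
  let ?N = "2 ^ n :: nat"
  let ?c = "ind n (chi a)"
  let ?P = "\<Sum>j<2 ^ n. (-1) ^ (ind n (chi a) + j) * Q_poly n a j"
  have c: "?c < ?N" by (rule ind_lt[OF zo_chi])
  have Peq: "?P = (\<Sum>(j::nat)<?N. (-1) ^ (?c + j) * det (mat_delete (IxA n) j ?c))"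
    unfolding Q_poly_def ..
  have V: "Abs_fps (\<lambda>m. real (num_vertices n m a)) = vT n ?c"
    unfolding vT_def num_vertices_chains[OF assms] ..
  have fid: "(1 - fps_X) ^ ?N * vT n ?c = fps_of_poly ?P"
    unfolding Peq by (rule fps_identity[OF c])
  have n0: "fps_nth ((1 - fps_X :: real fps) ^ ?N) 0 \<noteq> 0" by (simp add: fps_nth_power_0)
  have part1: "Abs_fps (\<lambda>m. real (num_vertices n m a)) = fps_of_poly ?P div (1 - fps_X) ^ ?N"
  proof -
    have "fps_of_poly ?P div (1 - fps_X) ^ ?N = fps_of_poly ?P * inverse ((1 - fps_X) ^ ?N)"
      by (rule fps_divide_unit[OF n0])
    also have "\<dots> = vT n ?c * ((1 - fps_X) ^ ?N * inverse ((1 - fps_X) ^ ?N))"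
      unfolding fid[symmetric] by (simp add: ac_simps)
    also have "\<dots> = vT n ?c" using inverse_mult_eq_1'[OF n0] by simp
    finally show ?thesis using V by simp
  qed
  have N1: "Suc (?N - 1) = ?N" by simp
  have "vT n ?c * (1 - fps_X) ^ Suc (?N - 1) = fps_of_poly ?P"
    unfolding N1 using fid by (simp add: ac_simps)
  moreover have "degree ?P \<le> ?N - 1" unfolding Peq by (rule deg_P[OF c])
  ultimately obtain q where q: "degree q \<le> ?N - 1" "\<forall>m. fps_nth (vT n ?c) m = poly q (real m)"
    using poly_coeffs by blast
  have "\<forall>m. real (num_vertices n m a) = poly q (real m)"
  proof
    fix m
    have "real (num_vertices n m a) = fps_nth (Abs_fps (\<lambda>m. real (num_vertices n m a))) m" by simp
    also have "\<dots> = fps_nth (vT n ?c) m" unfolding V ..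
    finally show "real (num_vertices n m a) = poly q (real m)" using q(2) by simp
  qed
  then show ?thesis using part1 q(1) by blast
qed


end
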